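(* Let $G$ be a finite group acting on a complex abelian variety $A$, and let $H\le G$. Let $H_1=H,H_2,\dots,H_s$ be the double cosets of $H$ in $G$, and $q_i:=\frac1{|H|}\sum_{y\in H_i}y$. Let $V$ be an irreducible complex representation of $G$ with $\dim V^H=1$ and $\chi_V$ rational-valued, and let $W$ be the associated irreducible rational representation. Then each $\chi_V(q_i)$ is an integer, each $q_i$ is an endomorphism of $A_H$, and $$A_{H,\widetilde W}=\{z\in A_H:\ q_i(z)=\chi_V(q_i)\,z\ \text{ for } i=1,\dots,s\}_0.$$
   Context: The action of $G$ on $A$ induces an algebra homomorphism $\mathbb{Q}[G]\to\mathrm{End}_{\mathbb Q}(A)$. Elements of $\mathbb{Q}[G]$ are identified with their images. For $\alpha\in\mathrm{End}_{\mathbb Q}(A)$, take any positive integer $n$ with $n\alpha\in\mathrm{End}(A)$ and set $\mathrm{Im}(\alpha):=\mathrm{Im}(n\alpha)$. This does not depend on $n$. Set $p_H:=\frac1{|H|}\sum_{h\in H}h$ and $A_H:=\mathrm{Im}(p_H)$; $p_H$ acts as the identity on $A_H$. $\chi_V$ is extended linearly to $\mathbb{Q}[G]$. Define $e_W:=\frac{\dim V}{|G|}\sum_{g}\chi_V(g^{-1})g$, $f_{H,\widetilde W}:=p_He_W$, and $A_{H,\widetilde W}:=\mathrm{Im}(f_{H,\widetilde W})$. $\{z\in A_H:\dots\}_0$ denotes the connected component containing $0$ of the indicated subset. *)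

theory Defs
  imports "HOL-Analysis.Analysis" "HOL-Algebra.Coset"
begin

text \<open>A lattice in V = complex^'n: the Z-span of an R-basis of V (viewed as real space R^(2n)).\<close>
definition is_lattice :: "(complex^'n) set \<Rightarrow> bool" where
  "is_lattice L \<longleftrightarrow> (\<exists>B. finite B \<and> independent B \<and> card B = DIM(complex^'n) \<and>
      L = {(\<Sum>b\<in>B. of_int (c b) *\<^sub>R b) | c. True})"

definition has_polarization :: "(complex^'n) set \<Rightarrow> bool" where
  "has_polarization L \<longleftrightarrow> (\<exists>E :: complex^'n \<Rightarrow> complex^'n \<Rightarrow> complex.
      (\<forall>x y z. E (x + y) z = E x z + E y z) \<and>
      (\<forall>c x y. E (c *s x) y = c * E x y) \<and>
      (\<forall>x y. E y x = cnj (E x y)) \<and>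
      (\<forall>x. x \<noteq> 0 \<longrightarrow> Re (E x x) > 0) \<and>
      (\<forall>l\<in>L. \<forall>m\<in>L. Im (E l m) \<in> \<int>))"

definition abelian_variety :: "(complex^'n) set \<Rightarrow> bool" where
  "abelian_variety L \<longleftrightarrow> is_lattice L \<and> has_polarization L"

text \<open>Points of A = V/L are the cosets x + L.\<close>
definition tpt :: "(complex^'n) set \<Rightarrow> complex^'n \<Rightarrow> (complex^'n) set" where
  "tpt L x = (\<lambda>l. x + l) ` L"

definition torus_top :: "(complex^'n) set \<Rightarrow> (complex^'n) set topology" where
  "torus_top L = topology (\<lambda>U. U \<subseteq> range (tpt L) \<and> open (tpt L -` U))"

text \<open>Action of G on A by automorphisms, given by analytic representations M g (C-linear, preserving L).\<close>
definition group_acts_on_av ::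
  "('g, 'b) monoid_scheme \<Rightarrow> (complex^'n) set \<Rightarrow> ('g \<Rightarrow> complex^'n^'n) \<Rightarrow> bool" where
  "group_acts_on_av G L M \<longleftrightarrow>
     (\<forall>g\<in>carrier G. \<forall>h\<in>carrier G. M (g \<otimes>\<^bsub>G\<^esub> h) = M g ** M h) \<and>
     M \<one>\<^bsub>G\<^esub> = mat 1 \<and>
     (\<forall>g\<in>carrier G. \<forall>l\<in>L. M g *v l \<in> L)"

text \<open>The image of an element sum_g a_g g of C[G] (here: Q[G]) in End_Q(A), acting on V.\<close>
definition grp_alg_map ::
  "('g, 'b) monoid_scheme \<Rightarrow> ('g \<Rightarrow> complex^'n^'n) \<Rightarrow> ('g \<Rightarrow> complex) \<Rightarrow> complex^'n \<Rightarrow> complex^'n" where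
  "grp_alg_map G M a = (\<lambda>x. \<Sum>g\<in>carrier G. a g *s (M g *v x))"

text \<open>Im(alpha) := Im(n alpha) for a positive n with n alpha in End(A), as a subset of A.\<close>
definition end_denom :: "(complex^'n) set \<Rightarrow> (complex^'n \<Rightarrow> complex^'n) \<Rightarrow> nat" where
  "end_denom L \<alpha> = (LEAST n. n > 0 \<and> (\<forall>l\<in>L. of_nat n *s \<alpha> l \<in> L))"

definition av_image :: "(complex^'n) set \<Rightarrow> (complex^'n \<Rightarrow> complex^'n) \<Rightarrow> (complex^'n) set set" where
  "av_image L \<alpha> = tpt L ` range (\<lambda>x. of_nat (end_denom L \<alpha>) *s \<alpha> x)"

definition is_rep :: "('g, 'b) monoid_scheme \<Rightarrow> ('g \<Rightarrow> complex^'m^'m) \<Rightarrow> bool" where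
  "is_rep G \<rho> \<longleftrightarrow> (\<forall>g\<in>carrier G. \<forall>h\<in>carrier G. \<rho> (g \<otimes>\<^bsub>G\<^esub> h) = \<rho> g ** \<rho> h) \<and>
                   \<rho> \<one>\<^bsub>G\<^esub> = mat 1"

definition irreducible_rep :: "('g, 'b) monoid_scheme \<Rightarrow> ('g \<Rightarrow> complex^'m^'m) \<Rightarrow> bool" where
  "irreducible_rep G \<rho> \<longleftrightarrow> is_rep G \<rho> \<and>
     (\<forall>S. vec.subspace S \<and> (\<forall>g\<in>carrier G. \<forall>v\<in>S. \<rho> g *v v \<in> S) \<longrightarrow> S = {0} \<or> S = UNIV)"

definition fixed_space :: "'g set \<Rightarrow> ('g \<Rightarrow> complex^'m^'m) \<Rightarrow> (complex^'m) set" where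
  "fixed_space H \<rho> = {v. \<forall>h\<in>H. \<rho> h *v v = v}"

definition character :: "('g \<Rightarrow> complex^'m^'m) \<Rightarrow> 'g \<Rightarrow> complex" where
  "character \<rho> g = trace (\<rho> g)"

definition double_cosets :: "('g, 'b) monoid_scheme \<Rightarrow> 'g set \<Rightarrow> 'g set set" where
  "double_cosets G H = {(H #>\<^bsub>G\<^esub> x) <#>\<^bsub>G\<^esub> H | x. x \<in> carrier G}"

text \<open>p_H = (1/|H|) sum_{h in H} h, and q_D = (1/|H|) sum_{y in D} y.\<close>
definition avg_map :: "('g, 'b) monoid_scheme \<Rightarrow> ('g \<Rightarrow> complex^'n^'n) \<Rightarrow> 'g set \<Rightarrow> 'g set \<Rightarrow> complex^'n \<Rightarrow> complex^'n" where
  "avg_map G M H D = grp_alg_map G M (\<lambda>g. if g \<in> D then 1 / of_nat (card H) else 0)"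

definition eW_map :: "('g, 'b) monoid_scheme \<Rightarrow> ('g \<Rightarrow> complex^'n^'n) \<Rightarrow> ('g \<Rightarrow> complex^'m^'m) \<Rightarrow> complex^'n \<Rightarrow> complex^'n" where
  "eW_map G M \<rho> = grp_alg_map G M
     (\<lambda>g. of_nat CARD('m) / of_nat (card (carrier G)) * character \<rho> (inv\<^bsub>G\<^esub> g))"

text \<open>chi_V extended linearly: chi_V(q_D).\<close>
definition chi_avg :: "('g \<Rightarrow> complex^'m^'m) \<Rightarrow> 'g set \<Rightarrow> 'g set \<Rightarrow> complex" where
  "chi_avg \<rho> H D = (1 / of_nat (card H)) * (\<Sum>y\<in>D. character \<rho> y)"

end

theory Submission
  imports Defs "Jordan_Normal_Form.Char_Poly"
begin

hide_const (open) Matrix.mat Matrix.vec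
lemmas cvec_eq_iff = Finite_Cartesian_Product.vec_eq_iff
no_notation Matrix.vec_index (infixl "$" 100)

locale gh = group G for G :: "('g,'b) monoid_scheme" (structure) +
  fixes H :: "'g set"
  assumes finG: "finite (carrier G)" and subH: "subgroup H G"
begin

lemma H_sub: "H \<subseteq> carrier G" using subH subgroup.subset by blast
lemma one_H: "\<one> \<in> H" using subH subgroup.one_closed by blast
lemma finH: "finite H" using H_sub finG finite_subset by blast
lemma cardH: "card H > 0" using finH one_H card_gt_0_iff by blast
lemma H_mult: "h \<in> H \<Longrightarrow> h' \<in> H \<Longrightarrow> h \<otimes> h' \<in> H" by (rule subgroup.m_closed[OF subH])
lemma H_inv: "h \<in> H \<Longrightarrow> inv h \<in> H" by (rule subgroup.m_inv_closed[OF subH])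
lemma H_car: "h \<in> H \<Longrightarrow> h \<in> carrier G" using H_sub by blast

lemma inv_cancel1[simp]: "x \<in> carrier G \<Longrightarrow> y \<in> carrier G \<Longrightarrow> inv x \<otimes> (x \<otimes> y) = y"
  by (simp add: m_assoc[symmetric])
lemma inv_cancel2[simp]: "x \<in> carrier G \<Longrightarrow> y \<in> carrier G \<Longrightarrow> x \<otimes> (inv x \<otimes> y) = y"
  by (simp add: m_assoc[symmetric])

definition dc where "dc x = (H #> x) <#> H"

lemma dc_iff: "k \<in> dc x \<longleftrightarrow> (\<exists>h\<in>H. \<exists>h'\<in>H. k = h \<otimes> x \<otimes> h')"
  unfolding dc_def r_coset_def set_mult_def by auto

lemma dcs_eq: "double_cosets G H = dc ` carrier G"
  unfolding double_cosets_def dc_def by auto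

lemma dc_sub: "x \<in> carrier G \<Longrightarrow> dc x \<subseteq> carrier G"
  by (auto simp: dc_iff H_car)

lemma dc_self: "x \<in> carrier G \<Longrightarrow> x \<in> dc x"
  unfolding dc_iff by (rule bexI[of _ \<one>], rule bexI[of _ \<one>]) (auto simp: one_H)

lemma dc_eq: assumes x: "x \<in> carrier G" and y: "y \<in> dc x" shows "dc y = dc x"
proof -
  from y obtain a b where a: "a \<in> H" and b: "b \<in> H" and yd: "y = a \<otimes> x \<otimes> b" by (auto simp: dc_iff)
  have "k \<in> dc x" if "k \<in> dc y" for k
  proof -
    from that obtain c d where c: "c \<in> H" and d: "d \<in> H" and "k = c \<otimes> y \<otimes> d" by (auto simp: dc_iff)
    hence "k = (c \<otimes> a) \<otimes> x \<otimes> (b \<otimes> d)" using a b c d x yd by (simp add: m_assoc H_car)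
    thus ?thesis using a b c d by (auto simp: dc_iff intro!: H_mult)
  qed
  moreover have "k \<in> dc y" if "k \<in> dc x" for k
  proof -
    from that obtain c d where c: "c \<in> H" and d: "d \<in> H" and kd: "k = c \<otimes> x \<otimes> d" by (auto simp: dc_iff)
    have "(c \<otimes> inv a) \<otimes> y \<otimes> (inv b \<otimes> d) = c \<otimes> (inv a \<otimes> a) \<otimes> x \<otimes> (b \<otimes> inv b) \<otimes> d"
      using a b c d x yd by (simp add: m_assoc H_car)
    also have "\<dots> = k" using a b c d x kd by (simp add: H_car)
    finally have "k = (c \<otimes> inv a) \<otimes> y \<otimes> (inv b \<otimes> d)" by simp
    thus ?thesis using a b c d by (auto simp: dc_iff intro!: H_mult H_inv)
  qed
  ultimately show ?thesis by blast
qed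

lemma dcs_sub: "D \<in> double_cosets G H \<Longrightarrow> D \<subseteq> carrier G"
  using dc_sub by (auto simp: dcs_eq)

lemma dcs_disj: assumes "D \<in> double_cosets G H" "E \<in> double_cosets G H" "D \<noteq> E" shows "D \<inter> E = {}"
proof (rule ccontr)
  assume "D \<inter> E \<noteq> {}"
  then obtain k where k: "k \<in> D" "k \<in> E" by blast
  from assms obtain x y where x: "x \<in> carrier G" "D = dc x" and y: "y \<in> carrier G" "E = dc y" by (auto simp: dcs_eq)
  have "dc k = dc x" using dc_eq x k by blast
  moreover have "dc k = dc y" using dc_eq y k by blast
  ultimately show False using assms x y by simp
qed

lemma dcs_Union: "\<Union> (double_cosets G H) = carrier G"
  using dc_sub dc_self by (auto simp: dcs_eq)

lemma dcs_fin: "finite (double_cosets G H)" using finG by (simp add: dcs_eq)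

lemma dcs_finD: "D \<in> double_cosets G H \<Longrightarrow> finite D"
  using dcs_sub finG finite_subset by blast

lemma dcs_lmult: assumes "D \<in> double_cosets G H" "y \<in> D" "h \<in> H" shows "h \<otimes> y \<in> D"
proof -
  from assms obtain x where x: "x \<in> carrier G" "D = dc x" by (auto simp: dcs_eq)
  from assms x obtain a b where a: "a \<in> H" and b: "b \<in> H" and yd: "y = a \<otimes> x \<otimes> b" by (auto simp: dc_iff)
  have "h \<otimes> y = (h \<otimes> a) \<otimes> x \<otimes> b" using a b x yd assms by (simp add: m_assoc H_car)
  thus ?thesis using a b x assms by (auto simp: dc_iff intro!: H_mult)
qed

lemma dcs_rmult: assumes "D \<in> double_cosets G H" "y \<in> D" "h \<in> H" shows "y \<otimes> h \<in> D"
proof -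
  from assms obtain x where x: "x \<in> carrier G" "D = dc x" by (auto simp: dcs_eq)
  from assms x obtain a b where a: "a \<in> H" and b: "b \<in> H" and yd: "y = a \<otimes> x \<otimes> b" by (auto simp: dc_iff)
  have "y \<otimes> h = a \<otimes> x \<otimes> (b \<otimes> h)" using a b x yd assms by (simp add: m_assoc H_car)
  thus ?thesis using a b x assms by (auto simp: dc_iff intro!: H_mult)
qed

lemma dcs_same: assumes "D \<in> double_cosets G H" "y \<in> D" "k \<in> D"
  shows "\<exists>h\<in>H. \<exists>h'\<in>H. k = h \<otimes> y \<otimes> h'"
proof -
  from assms obtain x where x: "x \<in> carrier G" "D = dc x" by (auto simp: dcs_eq)
  have "dc y = D" using dc_eq x assms by blast
  thus ?thesis using assms by (auto simp: dc_iff)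
qed

lemma H_dcs: "H \<in> double_cosets G H"
proof -
  have "dc \<one> = H"
  proof
    show "dc \<one> \<subseteq> H"
    proof
      fix k assume "k \<in> dc \<one>"
      then obtain h h' where "h \<in> H" "h' \<in> H" "k = h \<otimes> \<one> \<otimes> h'" by (auto simp: dc_iff)
      thus "k \<in> H" using H_car H_mult by simp
    qed
    show "H \<subseteq> dc \<one>"
    proof
      fix h assume h: "h \<in> H"
      have "h = h \<otimes> \<one> \<otimes> \<one>" using h H_car by simp
      thus "h \<in> dc \<one>" unfolding dc_iff using h one_H by blast
    qed
  qed
  thus ?thesis unfolding dcs_eq by (metis image_eqI one_closed)
qed

lemma sum_dcs: "(\<Sum>k\<in>carrier G. f k) = (\<Sum>D\<in>double_cosets G H. \<Sum>k\<in>D. f k)"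
proof -
  have "(\<Sum>k\<in>\<Union>(double_cosets G H). f k) = (\<Sum>D\<in>double_cosets G H. \<Sum>k\<in>D. f k)"
    using sum.Union_disjoint[of "double_cosets G H" f] dcs_fin dcs_finD dcs_disj by (simp add: disjoint_def)
  thus ?thesis by (simp add: dcs_Union)
qed

end


lemma matvec_smult: "A *v (c *s x) = c *s (A *v (x::complex^'k))"
  by (simp add: cvec_eq_iff matrix_vector_mult_def vector_scalar_mult_def sum_distrib_left mult.left_commute)

lemma matvec_sum: "finite S \<Longrightarrow> A *v (\<Sum>s\<in>S. f s) = (\<Sum>s\<in>S. A *v (f s::complex^'k))"
  by (induct rule: finite_induct) (simp_all add: matrix_vector_right_distrib)

lemma smult_sum: "c *s (\<Sum>s\<in>S. f s) = (\<Sum>s\<in>S. c *s (f s::complex^'k))"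
  by (rule vec.scale_sum_right)

context gh begin

lemma sum_lmult: "g \<in> carrier G \<Longrightarrow> (\<Sum>k\<in>carrier G. f (g \<otimes> k)) = (\<Sum>k\<in>carrier G. f k)"
  by (rule sum.reindex_bij_witness[where i="\<lambda>k. inv g \<otimes> k" and j="\<lambda>k. g \<otimes> k"]) auto

lemma sum_rmult: "g \<in> carrier G \<Longrightarrow> (\<Sum>k\<in>carrier G. f (k \<otimes> g)) = (\<Sum>k\<in>carrier G. f k)"
  by (rule sum.reindex_bij_witness[where i="\<lambda>k. k \<otimes> inv g" and j="\<lambda>k. k \<otimes> g"]) (auto simp: m_assoc)

lemma sum_inv: "(\<Sum>k\<in>carrier G. f (inv k)) = (\<Sum>k\<in>carrier G. f k)"
  by (rule sum.reindex_bij_witness[where i="\<lambda>k. inv k" and j="\<lambda>k. inv k"]) auto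

lemma rep_mult: "is_rep G R \<Longrightarrow> g \<in> carrier G \<Longrightarrow> h \<in> carrier G \<Longrightarrow> R (g \<otimes> h) = R g ** R h"
  unfolding is_rep_def by blast

lemma rep_one: "is_rep G R \<Longrightarrow> R \<one> = mat 1"
  unfolding is_rep_def by blast

lemma rep_mv: "is_rep G R \<Longrightarrow> g \<in> carrier G \<Longrightarrow> h \<in> carrier G \<Longrightarrow>
   R g *v (R h *v x) = R (g \<otimes> h) *v x"
  by (simp add: rep_mult matrix_vector_mul_assoc)

lemma rep_inv_l: "is_rep G R \<Longrightarrow> g \<in> carrier G \<Longrightarrow> R (inv g) *v (R g *v x) = x"
  by (simp add: rep_mv rep_one)

lemma rep_inv_r: "is_rep G R \<Longrightarrow> g \<in> carrier G \<Longrightarrow> R g *v (R (inv g) *v x) = x"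
  by (simp add: rep_mv rep_one)

lemma Aop_def': "grp_alg_map G R a x = (\<Sum>g\<in>carrier G. a g *s (R g *v x))"
  by (simp add: grp_alg_map_def)

lemma Aop_add: "grp_alg_map G R a (x + y) = grp_alg_map G R a x + grp_alg_map G R a (y::complex^'k)"
  by (simp add: grp_alg_map_def matrix_vector_right_distrib vec.scale_right_distrib sum.distrib)

lemma Aop_smult: "grp_alg_map G R a (c *s x) = c *s grp_alg_map G R a (x::complex^'k)"
  by (simp add: grp_alg_map_def matvec_smult smult_sum vec.scale_scale mult.commute)

lemma Aop_diff: "grp_alg_map G R a (x - y) = grp_alg_map G R a x - grp_alg_map G R a (y::complex^'k)"
  by (simp add: grp_alg_map_def matrix_vector_mult_diff_distrib vec.scale_right_diff_distrib sum_subtractf)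

lemma Aop_zero: "grp_alg_map G R a 0 = (0::complex^'k)"
  by (simp add: grp_alg_map_def)

lemma Aop_linear: "Vector_Spaces.linear (*s) (*s) (grp_alg_map G R a :: complex^'k \<Rightarrow> complex^'k)"
  by (simp add: Vector_Spaces.linear_iff vec.vector_space_axioms Aop_add Aop_smult)

lemma Aop_coef_add: "grp_alg_map G R (\<lambda>g. a g + b g) x = grp_alg_map G R a x + grp_alg_map G R b (x::complex^'k)"
  by (simp add: grp_alg_map_def vec.scale_left_distrib sum.distrib)

lemma Aop_coef_smult: "grp_alg_map G R (\<lambda>g. c * a g) x = c *s grp_alg_map G R a (x::complex^'k)"
  by (simp add: grp_alg_map_def smult_sum vec.scale_scale)

definition conv :: "('g \<Rightarrow> complex) \<Rightarrow> ('g \<Rightarrow> complex) \<Rightarrow> 'g \<Rightarrow> complex" where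
  "conv a b k = (\<Sum>g\<in>carrier G. a g * b (inv g \<otimes> k))"

lemma Aop_conv: assumes R: "is_rep G R"
  shows "grp_alg_map G R a (grp_alg_map G R b x) = grp_alg_map G R (conv a b) (x::complex^'k)"
proof -
  have "grp_alg_map G R a (grp_alg_map G R b x)
      = (\<Sum>g\<in>carrier G. \<Sum>h\<in>carrier G. (a g * b h) *s (R (g \<otimes> h) *v x))"
    by (simp add: grp_alg_map_def matvec_sum[OF finG] matvec_smult smult_sum vec.scale_scale rep_mv[OF R])
  also have "\<dots> = (\<Sum>g\<in>carrier G. \<Sum>k\<in>carrier G. (a g * b (inv g \<otimes> k)) *s (R k *v x))"
  proof (rule sum.cong[OF refl])
    fix g assume g: "g \<in> carrier G"
    show "(\<Sum>h\<in>carrier G. (a g * b h) *s (R (g \<otimes> h) *v x)) =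
          (\<Sum>k\<in>carrier G. (a g * b (inv g \<otimes> k)) *s (R k *v x))"
      using sum_lmult[OF inv_closed[OF g], of "\<lambda>h. (a g * b h) *s (R (g \<otimes> h) *v x)"] g
      by simp
  qed
  also have "\<dots> = (\<Sum>k\<in>carrier G. \<Sum>g\<in>carrier G. (a g * b (inv g \<otimes> k)) *s (R k *v x))"
    by (rule sum.swap)
  also have "\<dots> = grp_alg_map G R (conv a b) x"
    by (simp add: grp_alg_map_def conv_def vec.scale_sum_left)
  finally show ?thesis .
qed

end


context gh begin

definition qc :: "'g set \<Rightarrow> 'g \<Rightarrow> complex" where
  "qc D g = (if g \<in> D then 1 / of_nat (card H) else 0)"

lemma avg_qc: "avg_map G R H D = grp_alg_map G R (qc D)"
  by (simp add: avg_map_def qc_def[abs_def])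

lemma Aop_cong: "(\<And>g. g \<in> carrier G \<Longrightarrow> a g = b g) \<Longrightarrow> grp_alg_map G R a x = grp_alg_map G R b x"
  by (simp add: grp_alg_map_def)

lemma sum_qc: "D \<subseteq> carrier G \<Longrightarrow> (\<Sum>g\<in>carrier G. qc D g * F g) = (1 / of_nat (card H)) * (\<Sum>g\<in>D. F g)"
proof -
  assume D: "D \<subseteq> carrier G"
  have "(\<Sum>g\<in>carrier G. qc D g * F g) = (\<Sum>g\<in>carrier G. if g \<in> D then (1 / of_nat (card H)) * F g else 0)"
    by (rule sum.cong) (auto simp: qc_def)
  also have "\<dots> = (\<Sum>g\<in>carrier G \<inter> D. (1 / of_nat (card H)) * F g)"
    by (rule sum.inter_restrict[symmetric]) (rule finG)
  also have "carrier G \<inter> D = D" using D by blast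
  finally show ?thesis by (simp add: sum_distrib_left)
qed

lemma Aop_qc: "D \<subseteq> carrier G \<Longrightarrow> grp_alg_map G R (qc D) x = (1 / of_nat (card H)) *s (\<Sum>g\<in>D. R g *v (x::complex^'k))"
proof -
  assume D: "D \<subseteq> carrier G"
  have "grp_alg_map G R (qc D) x = (\<Sum>g\<in>carrier G. if g \<in> D then (1 / of_nat (card H)) *s (R g *v x) else 0)"
    unfolding grp_alg_map_def by (rule sum.cong) (auto simp: qc_def)
  also have "\<dots> = (\<Sum>g\<in>carrier G \<inter> D. (1 / of_nat (card H)) *s (R g *v x))"
    by (rule sum.inter_restrict[symmetric]) (rule finG)
  also have "carrier G \<inter> D = D" using D by blast
  finally show ?thesis by (simp add: smult_sum)
qed

lemma dcs_rmult_iff: "D \<in> double_cosets G H \<Longrightarrow> k \<in> carrier G \<Longrightarrow> h \<in> H \<Longrightarrow> k \<otimes> h \<in> D \<longleftrightarrow> k \<in> D"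
proof
  assume a: "D \<in> double_cosets G H" "k \<in> carrier G" "h \<in> H" "k \<otimes> h \<in> D"
  have "k \<otimes> h \<otimes> inv h \<in> D" using dcs_rmult[OF a(1) a(4) H_inv[OF a(3)]] .
  thus "k \<in> D" using a H_car by (simp add: m_assoc)
qed (rule dcs_rmult)

lemma dcs_lmult_iff: "D \<in> double_cosets G H \<Longrightarrow> k \<in> carrier G \<Longrightarrow> h \<in> H \<Longrightarrow> h \<otimes> k \<in> D \<longleftrightarrow> k \<in> D"
proof
  assume a: "D \<in> double_cosets G H" "k \<in> carrier G" "h \<in> H" "h \<otimes> k \<in> D"
  have "inv h \<otimes> (h \<otimes> k) \<in> D" using dcs_lmult[OF a(1) a(4) H_inv[OF a(3)]] .
  thus "k \<in> D" using a H_car by simp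
qed (rule dcs_lmult)

lemma convH_left: "k \<in> carrier G \<Longrightarrow> conv (qc H) b k = (1 / of_nat (card H)) * (\<Sum>h\<in>H. b (inv h \<otimes> k))"
  unfolding conv_def by (rule sum_qc[OF H_sub])

lemma convH_right: assumes k: "k \<in> carrier G"
  shows "conv a (qc H) k = (1 / of_nat (card H)) * (\<Sum>h\<in>H. a (k \<otimes> inv h))"
proof -
  have "conv a (qc H) k = (\<Sum>g\<in>carrier G. a (k \<otimes> g) * qc H (inv (k \<otimes> g) \<otimes> k))"
    unfolding conv_def by (rule sum_lmult[OF k, symmetric])
  also have "\<dots> = (\<Sum>g\<in>carrier G. a (k \<otimes> g) * qc H (inv g))"
    by (rule sum.cong) (auto simp: k inv_mult_group m_assoc)
  also have "\<dots> = (\<Sum>g\<in>carrier G. a (k \<otimes> inv g) * qc H (inv (inv g)))"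
    by (rule sum_inv[symmetric])
  also have "\<dots> = (\<Sum>g\<in>carrier G. qc H g * a (k \<otimes> inv g))"
    by (rule sum.cong) (auto simp: mult.commute)
  also have "\<dots> = (1 / of_nat (card H)) * (\<Sum>h\<in>H. a (k \<otimes> inv h))"
    by (rule sum_qc[OF H_sub])
  finally show ?thesis .
qed

lemma sum_H_const: "(\<And>h. h \<in> H \<Longrightarrow> F h = c) \<Longrightarrow> (1 / of_nat (card H)) * (\<Sum>h\<in>H. F h) = (c::complex)"
  using cardH by simp

lemma conv_qc_H: assumes D: "D \<in> double_cosets G H" and k: "k \<in> carrier G"
  shows "conv (qc D) (qc H) k = qc D k"
  unfolding convH_right[OF k]
  by (rule sum_H_const) (simp add: qc_def dcs_rmult_iff[OF D] k H_inv)

lemma conv_H_qc: assumes D: "D \<in> double_cosets G H" and k: "k \<in> carrier G"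
  shows "conv (qc H) (qc D) k = qc D k"
  unfolding convH_left[OF k]
  by (rule sum_H_const) (simp add: qc_def dcs_lmult_iff[OF D] k H_inv)

lemma qD_pH: assumes R: "is_rep G R" and D: "D \<in> double_cosets G H"
  shows "grp_alg_map G R (qc D) (grp_alg_map G R (qc H) x) = grp_alg_map G R (qc D) (x::complex^'k)"
  by (simp add: Aop_conv[OF R] conv_qc_H[OF D] cong: Aop_cong)

lemma pH_qD: assumes R: "is_rep G R" and D: "D \<in> double_cosets G H"
  shows "grp_alg_map G R (qc H) (grp_alg_map G R (qc D) x) = grp_alg_map G R (qc D) (x::complex^'k)"
  by (simp add: Aop_conv[OF R] conv_H_qc[OF D] cong: Aop_cong)

lemma pH_idem: assumes R: "is_rep G R"
  shows "grp_alg_map G R (qc H) (grp_alg_map G R (qc H) x) = grp_alg_map G R (qc H) (x::complex^'k)"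
  by (rule qD_pH[OF R H_dcs])

lemma pH_fixed: assumes R: "is_rep G R" and h: "h \<in> H"
  shows "R h *v grp_alg_map G R (qc H) x = grp_alg_map G R (qc H) (x::complex^'k)"
proof -
  have hc: "h \<in> carrier G" using h H_car by blast
  have "R h *v grp_alg_map G R (qc H) x = (\<Sum>g\<in>carrier G. qc H g *s (R (h \<otimes> g) *v x))"
    by (simp add: grp_alg_map_def matvec_sum[OF finG] matvec_smult rep_mv[OF R hc])
  also have "\<dots> = (\<Sum>g\<in>carrier G. qc H (inv h \<otimes> g) *s (R (h \<otimes> (inv h \<otimes> g)) *v x))"
    by (rule sum_lmult[OF inv_closed[OF hc], symmetric])
  also have "\<dots> = (\<Sum>g\<in>carrier G. qc H g *s (R g *v x))"
    by (rule sum.cong) (auto simp: hc qc_def dcs_lmult_iff[OF H_dcs] H_inv h)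
  finally show ?thesis by (simp add: grp_alg_map_def)
qed

lemma of_nat_vec_comp: "(of_nat n :: 'a::semiring_1^'k) $ i = of_nat n"
  by (induct n) simp_all

lemma fixed_pH: assumes fx: "\<And>h. h \<in> H \<Longrightarrow> R h *v x = x"
  shows "grp_alg_map G R (qc H) x = (x::complex^'k)"
proof -
  have "grp_alg_map G R (qc H) x = (1 / of_nat (card H)) *s (\<Sum>g\<in>H. R g *v x)"
    by (rule Aop_qc[OF H_sub])
  also have "\<dots> = (1 / of_nat (card H)) *s (\<Sum>g\<in>H. x)" by (simp add: fx)
  also have "\<dots> = x" using cardH
    by (simp add: cvec_eq_iff vector_scalar_mult_def of_nat_vec_comp)
  finally show ?thesis .
qed

lemma fixed_space_pH: assumes R: "is_rep G R"
  shows "fixed_space H R = {x::complex^'k. grp_alg_map G R (qc H) x = x}"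
proof -
  have "x \<in> fixed_space H R \<longleftrightarrow> grp_alg_map G R (qc H) x = x" for x :: "complex^'k"
  proof
    assume "x \<in> fixed_space H R"
    hence "\<And>h. h \<in> H \<Longrightarrow> R h *v x = x" unfolding fixed_space_def by blast
    thus "grp_alg_map G R (qc H) x = x" using fixed_pH by blast
  next
    assume x: "grp_alg_map G R (qc H) x = x"
    have "R h *v x = x" if "h \<in> H" for h using pH_fixed[OF R that, of x] x by simp
    thus "x \<in> fixed_space H R" unfolding fixed_space_def by blast
  qed
  thus ?thesis by blast
qed

end


context gh begin

lemma lcos_iff: "z \<in> y <# H \<longleftrightarrow> (\<exists>h\<in>H. z = y \<otimes> h)"
  unfolding l_coset_def by auto

lemma lcos_self: "y \<in> carrier G \<Longrightarrow> y \<in> y <# H"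
  unfolding lcos_iff using one_H by (intro bexI[of _ \<one>]) auto

lemma lcos_eq: assumes y: "y \<in> carrier G" and z: "z \<in> y <# H" shows "z <# H = y <# H"
proof -
  from z obtain h where h: "h \<in> H" and zd: "z = y \<otimes> h" by (auto simp: lcos_iff)
  have "w \<in> y <# H" if "w \<in> z <# H" for w
  proof -
    from that obtain h' where h': "h' \<in> H" "w = z \<otimes> h'" by (auto simp: lcos_iff)
    hence "w = y \<otimes> (h \<otimes> h')" using zd y h H_car by (simp add: m_assoc)
    thus ?thesis using h h' H_mult by (auto simp: lcos_iff)
  qed
  moreover have "w \<in> z <# H" if "w \<in> y <# H" for w
  proof -
    from that obtain h' where h': "h' \<in> H" "w = y \<otimes> h'" by (auto simp: lcos_iff)
    have "z \<otimes> (inv h \<otimes> h') = y \<otimes> (h \<otimes> (inv h \<otimes> h'))" using zd y h h' H_car by (simp add: m_assoc)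
    also have "\<dots> = w" using h h' H_car h' by simp
    finally have "w = z \<otimes> (inv h \<otimes> h')" by simp
    thus ?thesis unfolding lcos_iff using h h' H_mult H_inv by blast
  qed
  ultimately show ?thesis by blast
qed

definition lrep :: "'g set \<Rightarrow> 'g" where "lrep C = (SOME y. y \<in> C)"

definition LC :: "'g set \<Rightarrow> 'g set set" where "LC D = (\<lambda>y. y <# H) ` D"

lemma LC_props: assumes D: "D \<in> double_cosets G H" and C: "C \<in> LC D"
  shows "lrep C \<in> D" "lrep C \<in> carrier G" "C = lrep C <# H" "C \<subseteq> D"
proof -
  from C obtain y where y: "y \<in> D" and Cd: "C = y <# H" by (auto simp: LC_def)
  have yc: "y \<in> carrier G" using y dcs_sub[OF D] by blast
  have "y \<in> C" using Cd lcos_self yc by blast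
  hence r: "lrep C \<in> C" unfolding lrep_def by (rule someI)
  then obtain h where h: "h \<in> H" "lrep C = y \<otimes> h" using Cd by (auto simp: lcos_iff)
  show "lrep C \<in> D" using h dcs_rmult[OF D y] by simp
  thus "lrep C \<in> carrier G" using dcs_sub[OF D] by blast
  show "C = lrep C <# H" using lcos_eq[OF yc] r Cd by simp
  show "C \<subseteq> D" using Cd dcs_rmult[OF D y] by (auto simp: lcos_iff)
qed

lemma LC_fin: "D \<in> double_cosets G H \<Longrightarrow> finite (LC D)"
  unfolding LC_def using dcs_finD by blast

lemma LC_Union: "D \<in> double_cosets G H \<Longrightarrow> \<Union>(LC D) = D"
proof
  assume D: "D \<in> double_cosets G H"
  show "\<Union>(LC D) \<subseteq> D" using LC_props(4)[OF D] by blast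
  show "D \<subseteq> \<Union>(LC D)"
  proof
    fix y assume y: "y \<in> D"
    hence "y \<in> y <# H" using lcos_self dcs_sub[OF D] by blast
    thus "y \<in> \<Union>(LC D)" using y unfolding LC_def by blast
  qed
qed

lemma LC_disj: assumes D: "D \<in> double_cosets G H" and C1: "C1 \<in> LC D" and C2: "C2 \<in> LC D"
  and ne: "C1 \<noteq> C2" shows "C1 \<inter> C2 = {}"
proof (rule ccontr)
  assume "C1 \<inter> C2 \<noteq> {}"
  then obtain z where z: "z \<in> C1" "z \<in> C2" by blast
  from C1 obtain y1 where y1: "y1 \<in> D" "C1 = y1 <# H" by (auto simp: LC_def)
  from C2 obtain y2 where y2: "y2 \<in> D" "C2 = y2 <# H" by (auto simp: LC_def)
  have "z <# H = C1" using lcos_eq y1 z dcs_sub[OF D] by blast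
  moreover have "z <# H = C2" using lcos_eq y2 z dcs_sub[OF D] by blast
  ultimately show False using ne by simp
qed

lemma sum_lcos: assumes r: "r \<in> carrier G"
  shows "(\<Sum>z\<in>r <# H. f z) = (\<Sum>h\<in>H. f (r \<otimes> h))"
proof -
  have "r <# H = (\<lambda>h. r \<otimes> h) ` H" unfolding l_coset_def by auto
  moreover have "inj_on (\<lambda>h. r \<otimes> h) H" using r H_car by (auto simp: inj_on_def)
  ultimately show ?thesis by (simp add: sum.reindex)
qed

lemma sum_LC: assumes D: "D \<in> double_cosets G H"
  shows "(\<Sum>y\<in>D. f y) = (\<Sum>C\<in>LC D. \<Sum>h\<in>H. f (lrep C \<otimes> h))"
proof -
  have "(\<Sum>y\<in>\<Union>(LC D). f y) = (\<Sum>C\<in>LC D. \<Sum>y\<in>C. f y)"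
  proof -
    have fin: "\<forall>A\<in>LC D. finite A" using LC_props(4)[OF D] dcs_finD[OF D] finite_subset by blast
    have disj: "\<forall>A\<in>LC D. \<forall>B\<in>LC D. A \<noteq> B \<longrightarrow> A \<inter> B = {}" using LC_disj[OF D] by blast
    show ?thesis using sum.Union_disjoint[OF fin disj, of f] by simp
  qed
  also have "\<dots> = (\<Sum>C\<in>LC D. \<Sum>h\<in>H. f (lrep C \<otimes> h))"
  proof (rule sum.cong[OF refl])
    fix C assume C: "C \<in> LC D"
    show "(\<Sum>y\<in>C. f y) = (\<Sum>h\<in>H. f (lrep C \<otimes> h))"
      using sum_lcos[OF LC_props(2)[OF D C]] LC_props(3)[OF D C] by simp
  qed
  finally show ?thesis using LC_Union[OF D] by simp
qed

lemma ofnat_mult_vec: "(of_nat n :: complex^'k) * x = of_nat n *s x"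
  by (rule cvec_eq_iff[THEN iffD2]) (simp add: vector_scalar_mult_def of_nat_vec_comp)

lemma sum_H_smult: "(\<Sum>h\<in>H. (x::complex^'k)) = of_nat (card H) *s x"
  by (simp add: ofnat_mult_vec)

lemma Aop_qD_fixed: assumes R: "is_rep G R" and D: "D \<in> double_cosets G H"
  and fx: "\<And>h. h \<in> H \<Longrightarrow> R h *v x = (x::complex^'k)"
  shows "grp_alg_map G R (qc D) x = (\<Sum>C\<in>LC D. R (lrep C) *v x)"
proof -
  have "grp_alg_map G R (qc D) x = (1 / of_nat (card H)) *s (\<Sum>g\<in>D. R g *v x)"
    by (rule Aop_qc[OF dcs_sub[OF D]])
  also have "(\<Sum>g\<in>D. R g *v x) = (\<Sum>C\<in>LC D. \<Sum>h\<in>H. R (lrep C \<otimes> h) *v x)"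
    by (rule sum_LC[OF D])
  also have "\<dots> = (\<Sum>C\<in>LC D. of_nat (card H) *s (R (lrep C) *v x))"
  proof (rule sum.cong[OF refl])
    fix C assume C: "C \<in> LC D"
    have "(\<Sum>h\<in>H. R (lrep C \<otimes> h) *v x) = (\<Sum>h\<in>H. R (lrep C) *v x)"
      by (rule sum.cong[OF refl]) (simp add: rep_mv[OF R, symmetric] LC_props(2)[OF D C] H_car fx)
    thus "(\<Sum>h\<in>H. R (lrep C \<otimes> h) *v x) = of_nat (card H) *s (R (lrep C) *v x)"
      by (simp add: ofnat_mult_vec)
  qed
  finally show ?thesis using cardH by (simp add: smult_sum[symmetric] vec.scale_scale)
qed

definition drep :: "'g set \<Rightarrow> 'g" where "drep D = (SOME y. y \<in> D)"

lemma drep_in: assumes D: "D \<in> double_cosets G H" shows "drep D \<in> D"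
proof -
  from D obtain x where x: "x \<in> carrier G" "D = dc x" by (auto simp: dcs_eq)
  hence "x \<in> D" using dc_self by blast
  thus ?thesis unfolding drep_def by (rule someI)
qed

lemma Aop_biinv: assumes R: "is_rep G R"
  and ul: "\<And>h k. h \<in> H \<Longrightarrow> k \<in> carrier G \<Longrightarrow> u (h \<otimes> k) = u k"
  and ur: "\<And>h k. h \<in> H \<Longrightarrow> k \<in> carrier G \<Longrightarrow> u (k \<otimes> h) = u k"
  shows "grp_alg_map G R u x = (\<Sum>D\<in>double_cosets G H. (u (drep D) * of_nat (card H)) *s grp_alg_map G R (qc D) (x::complex^'k))"
proof -
  have "grp_alg_map G R u x = (\<Sum>D\<in>double_cosets G H. \<Sum>k\<in>D. u k *s (R k *v x))"
    unfolding grp_alg_map_def by (rule sum_dcs)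
  also have "\<dots> = (\<Sum>D\<in>double_cosets G H. (u (drep D) * of_nat (card H)) *s grp_alg_map G R (qc D) x)"
  proof (rule sum.cong[OF refl])
    fix D assume D: "D \<in> double_cosets G H"
    have "(\<Sum>k\<in>D. u k *s (R k *v x)) = (\<Sum>k\<in>D. u (drep D) *s (R k *v x))"
    proof (rule sum.cong[OF refl])
      fix k assume k: "k \<in> D"
      obtain h h' where hh: "h \<in> H" "h' \<in> H" "k = h \<otimes> drep D \<otimes> h'"
        using dcs_same[OF D drep_in[OF D] k] by blast
      have dc: "drep D \<in> carrier G" using drep_in[OF D] dcs_sub[OF D] by blast
      have "u k = u (drep D)" using hh ul ur dc H_car by simp
      thus "u k *s (R k *v x) = u (drep D) *s (R k *v x)" by simp
    qed
    also have "\<dots> = (u (drep D) * of_nat (card H)) *s grp_alg_map G R (qc D) x"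
      using cardH by (simp add: Aop_qc[OF dcs_sub[OF D]] smult_sum[symmetric] vec.scale_scale)
    finally show "(\<Sum>k\<in>D. u k *s (R k *v x)) = (u (drep D) * of_nat (card H)) *s grp_alg_map G R (qc D) x" .
  qed
  finally show ?thesis .
qed

end


lemma eigen_exists:
  fixes X :: "complex^'m^'m"
  shows "\<exists>c u. u \<noteq> 0 \<and> X *v u = c *s u"
proof -
  define n where "n = CARD('m)"
  obtain f where f: "bij_betw f {0..<n} (UNIV::'m set)"
    using ex_bij_betw_nat_finite[of "UNIV::'m set"] unfolding n_def by auto
  define B :: "complex Matrix.mat" where "B = Matrix.mat n n (\<lambda>(i,j). X $ f i $ f j)"
  have Bc: "B \<in> carrier_mat n n" unfolding B_def by simp
  have n0: "n > 0" unfolding n_def by simp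
  obtain as where as: "char_poly B = (\<Prod>a\<leftarrow>as. [:- a, 1:])" "length as = n"
    using char_poly_factorized[OF Bc] by blast
  then obtain a where a: "a \<in> set as" using n0 by (cases as) auto
  have "poly (char_poly B) a = 0" unfolding as(1) using a
    by (simp add: poly_prod_list prod_list_zero_iff)
  hence "eigenvalue B a" using eigenvalue_root_char_poly[OF Bc] by simp
  then obtain v where v: "eigenvector B v a" unfolding eigenvalue_def by blast
  hence vc: "v \<in> carrier_vec n" and vnz: "v \<noteq> 0\<^sub>v n" and Bv: "B *\<^sub>v v = a \<cdot>\<^sub>v v"
    unfolding eigenvector_def using Bc by auto
  have dv: "dim_vec v = n" using vc by simp
  define g where "g = inv_into {0..<n} f"
  have gf: "g (f i) = i" if "i < n" for i using f that unfolding g_def bij_betw_def by (simp add: inv_into_f_f)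
  have fg: "f (g k) = k" for k using f unfolding g_def bij_betw_def by (simp add: f_inv_into_f)
  have gn: "g k < n" for k using f unfolding g_def bij_betw_def
    by (metis atLeastLessThan_iff inv_into_into UNIV_I)
  define u :: "complex^'m" where "u = (\<chi> k. vec_index v (g k))"
  have sum_re: "(\<Sum>l\<in>UNIV. F l) = (\<Sum>j\<in>{0..<n}. F (f j))" for F :: "'m \<Rightarrow> complex"
    using sum.reindex_bij_betw[OF f, of F] by simp
  have "X *v u = a *s u"
  proof (rule cvec_eq_iff[THEN iffD2], rule allI)
    fix k :: 'm
    have i: "g k < n" by (rule gn)
    have "(X *v u) $ k = (\<Sum>l\<in>UNIV. X $ k $ l * u $ l)" by (simp add: matrix_vector_mult_def)
    also have "\<dots> = (\<Sum>j\<in>{0..<n}. X $ k $ f j * vec_index v j)" unfolding sum_re u_def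
      by (rule sum.cong) (auto simp: gf)
    also have "\<dots> = vec_index (B *\<^sub>v v) (g k)"
      using i dv by (simp add: B_def scalar_prod_def fg)
    also have "\<dots> = a * vec_index v (g k)" using Bv i dv by simp
    also have "\<dots> = (a *s u) $ k" by (simp add: u_def vector_scalar_mult_def)
    finally show "(X *v u) $ k = (a *s u) $ k" .
  qed
  moreover have "u \<noteq> 0"
  proof
    assume u0: "u = 0"
    have "v = 0\<^sub>v n"
    proof (rule eq_vecI)
      fix i assume "i < dim_vec (0\<^sub>v n)"
      hence i: "i < n" by simp
      have "vec_index v i = u $ f i" by (simp add: u_def gf i)
      thus "vec_index v i = vec_index (0\<^sub>v n) i" using u0 i by simp
    qed (simp add: dv)
    with vnz show False by simp
  qed
  ultimately show ?thesis by blast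
qed


lemma mmult_sum_left: "finite S \<Longrightarrow> (A::complex^'n^'m) ** (\<Sum>s\<in>S. f s) = (\<Sum>s\<in>S. A ** (f s :: complex^'p^'n))"
  by (induct rule: finite_induct) (simp_all add: matrix_add_ldistrib)

lemma matrix_add_rdistrib': "((B + C) ** A) = (B ** A) + (C ** (A::complex^'p^'n) :: complex^'p^'m)"
  by (vector matrix_matrix_mult_def sum.distrib[symmetric] field_simps)

lemma mmult_sum_right: "finite S \<Longrightarrow> (\<Sum>s\<in>S. f s) ** (A::complex^'p^'n) = (\<Sum>s\<in>S. (f s :: complex^'n^'m) ** A)"
  by (induct rule: finite_induct) (simp_all add: matrix_add_rdistrib')

lemma mat_sum_entry: "(\<Sum>s\<in>S. f s) $ j $ l = (\<Sum>s\<in>S. (f s :: complex^'n^'m) $ j $ l)"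
  by (simp add: sum_component)

lemma trace_sum: "finite S \<Longrightarrow> trace (\<Sum>s\<in>S. f s) = (\<Sum>s\<in>S. trace (f s :: complex^'n^'n))"
  unfolding trace_def mat_sum_entry by (rule sum.swap)

lemma mv_axis: "(A *v axis l 1) $ j = (A::complex^'n^'m) $ j $ l"
  by (simp add: matrix_vector_mult_def axis_def if_distrib cong: if_cong)

context gh begin

lemma Schur:
  fixes \<rho> :: "'g \<Rightarrow> complex^'m^'m" and X :: "complex^'m^'m"
  assumes irr: "irreducible_rep G \<rho>" and comm: "\<And>g. g \<in> carrier G \<Longrightarrow> X ** \<rho> g = \<rho> g ** X"
  shows "\<exists>c. \<forall>x. X *v x = c *s x"
proof -
  obtain c u where u: "u \<noteq> 0" "X *v u = c *s u" using eigen_exists[of X] by blast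
  define S where "S = {x. X *v x = c *s x}"
  have sub: "vec.subspace S" unfolding S_def vec.subspace_def
    by (auto simp: matrix_vector_right_distrib vec.scale_right_distrib matvec_smult vec.scale_scale mult.commute)
  have inv: "\<forall>g\<in>carrier G. \<forall>v\<in>S. \<rho> g *v v \<in> S"
  proof (intro ballI)
    fix g v assume g: "g \<in> carrier G" and v: "v \<in> S"
    have "X *v (\<rho> g *v v) = (X ** \<rho> g) *v v" by (simp add: matrix_vector_mul_assoc)
    also have "\<dots> = \<rho> g *v (X *v v)" using comm[OF g] by (simp add: matrix_vector_mul_assoc)
    also have "\<dots> = c *s (\<rho> g *v v)" using v by (simp add: S_def matvec_smult)
    finally show "\<rho> g *v v \<in> S" unfolding S_def by simp
  qed
  have "S = {0} \<or> S = UNIV" using irr sub inv unfolding irreducible_rep_def by blast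
  moreover have "u \<in> S" using u unfolding S_def by simp
  ultimately have "S = UNIV" using u by blast
  thus ?thesis unfolding S_def by blast
qed

definition Tm :: "('g \<Rightarrow> complex^'m^'m) \<Rightarrow> complex^'m^'m \<Rightarrow> complex^'m^'m" where
  "Tm \<rho> X = (\<Sum>g\<in>carrier G. \<rho> g ** X ** \<rho> (inv g))"

lemma Tm_comm: assumes R: "is_rep G \<rho>" and h: "h \<in> carrier G"
  shows "Tm \<rho> X ** \<rho> h = \<rho> h ** Tm \<rho> X"
proof -
  have "\<rho> h ** Tm \<rho> X = (\<Sum>g\<in>carrier G. \<rho> (h \<otimes> g) ** X ** \<rho> (inv g))"
    unfolding Tm_def mmult_sum_left[OF finG]
    by (rule sum.cong) (simp_all add: rep_mult[OF R h] matrix_mul_assoc)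
  also have "\<dots> = (\<Sum>g\<in>carrier G. \<rho> (h \<otimes> (inv h \<otimes> g)) ** X ** \<rho> (inv (inv h \<otimes> g)))"
    by (rule sum_lmult[OF inv_closed[OF h], symmetric])
  also have "\<dots> = (\<Sum>g\<in>carrier G. \<rho> g ** X ** \<rho> (inv g) ** \<rho> h)"
    by (rule sum.cong) (simp_all add: h inv_mult_group rep_mult[OF R] matrix_mul_assoc)
  also have "\<dots> = Tm \<rho> X ** \<rho> h" unfolding Tm_def mmult_sum_right[OF finG] ..
  finally show ?thesis by simp
qed

lemma Tm_trace: assumes R: "is_rep G \<rho>"
  shows "trace (Tm \<rho> X) = of_nat (card (carrier G)) * trace X"
proof -
  have "trace (Tm \<rho> X) = (\<Sum>g\<in>carrier G. trace (\<rho> g ** X ** \<rho> (inv g)))"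
    unfolding Tm_def by (rule trace_sum[OF finG])
  also have "\<dots> = (\<Sum>g\<in>carrier G. trace X)"
  proof (rule sum.cong[OF refl])
    fix g assume g: "g \<in> carrier G"
    have "trace (\<rho> g ** X ** \<rho> (inv g)) = trace (\<rho> (inv g) ** (\<rho> g ** X))"
      by (rule trace_mul_sym)
    also have "\<dots> = trace X" using g by (simp add: matrix_mul_assoc rep_mult[OF R, symmetric] rep_one[OF R])
    finally show "trace (\<rho> g ** X ** \<rho> (inv g)) = trace X" .
  qed
  finally show ?thesis by simp
qed

lemma orth:
  fixes \<rho> :: "'g \<Rightarrow> complex^'m^'m"
  assumes irr: "irreducible_rep G \<rho>"
  shows "(\<Sum>g\<in>carrier G. \<rho> g $ j $ i * \<rho> (inv g) $ k $ l) =
     (if j = l \<and> i = k then of_nat (card (carrier G)) / of_nat CARD('m) else 0)"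
proof -
  have R: "is_rep G \<rho>" using irr unfolding irreducible_rep_def by blast
  define E :: "complex^'m^'m" where "E = (\<chi> a b. if a = i \<and> b = k then 1 else 0)"
  obtain c where c: "\<forall>x. Tm \<rho> E *v x = c *s x"
    using Schur[OF irr, of "Tm \<rho> E"] Tm_comm[OF R] by metis
  have ent: "Tm \<rho> E $ j' $ l' = (if j' = l' then c else 0)" for j' l'
    using c mv_axis[of "Tm \<rho> E" l' j'] by (cases "j' = l'") (simp_all add: vector_scalar_mult_def axis_def)
  have tr: "trace (Tm \<rho> E) = c * of_nat CARD('m)"
    by (simp add: trace_def ent)
  have trE: "trace E = (if i = k then 1 else 0)"
  proof (cases "i = k")
    case True thus ?thesis by (simp add: trace_def E_def)
  next
    case False thus ?thesis by (auto simp: trace_def E_def intro!: sum.neutral)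
  qed
  have cval: "c = (if i = k then of_nat (card (carrier G)) / of_nat CARD('m) else 0)"
    using Tm_trace[OF R, of E] tr trE by (auto simp: field_simps)
  have "Tm \<rho> E $ j $ l = (\<Sum>g\<in>carrier G. \<rho> g $ j $ i * \<rho> (inv g) $ k $ l)"
    unfolding Tm_def mat_sum_entry
  proof (rule sum.cong[OF refl])
    fix g assume "g \<in> carrier G"
    have 1: "(\<rho> g ** E) $ j $ b = (if b = k then \<rho> g $ j $ i else 0)" for b
      by (cases "b = k") (simp_all add: matrix_matrix_mult_def E_def if_distrib cong: if_cong)
    show "(\<rho> g ** E ** \<rho> (inv g)) $ j $ l = \<rho> g $ j $ i * \<rho> (inv g) $ k $ l"
      by (simp add: matrix_matrix_mult_def[of "\<rho> g ** E"] 1 if_distrib if_distribR cong: if_cong)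
  qed
  thus ?thesis using ent[of j l] cval by (cases "j = l"; cases "i = k") simp_all
qed

end


lemma card1_singleton: "card B = Suc 0 \<Longrightarrow> \<exists>v. B = {v}"
  by (auto simp: card_Suc_eq)

context gh begin

lemma Aop_sum: "grp_alg_map G R a (\<Sum>i\<in>S. f i) = (\<Sum>i\<in>S. grp_alg_map G R a (f i :: complex^'k))"
  by (induct S rule: infinite_finite_induct) (simp_all add: Aop_add Aop_zero)

definition Mq :: "('g \<Rightarrow> complex^'k^'k) \<Rightarrow> ('g \<Rightarrow> complex) \<Rightarrow> complex^'k^'k" where
  "Mq R a = (\<chi> i j. \<Sum>g\<in>carrier G. a g * R g $ i $ j)"

lemma Mq_mv: "Mq R a *v x = grp_alg_map G R a x"
  by (simp add: cvec_eq_iff Mq_def grp_alg_map_def matrix_vector_mult_def sum_component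
      vector_scalar_mult_def sum_distrib_left sum_distrib_right mult.assoc sum.swap[of _ UNIV])

lemma trace_Mq_mult: "trace (A ** Mq R a) = (\<Sum>g\<in>carrier G. a g * trace (A ** (R g :: complex^'k^'k)))"
  by (simp add: trace_def matrix_matrix_mult_def Mq_def sum_distrib_left sum_distrib_right
      mult.left_commute sum.swap[of _ "carrier G"])

lemma trace_Mq: "trace (Mq R a) = (\<Sum>g\<in>carrier G. a g * trace (R g :: complex^'k^'k))"
  using trace_Mq_mult[of "mat 1" R a] by simp

end

locale ghr = gh G H for G :: "('g,'b) monoid_scheme" (structure) and H +
  fixes \<rho> :: "'g \<Rightarrow> complex^'m^'m"
  assumes irr: "irreducible_rep G \<rho>"
    and dim1: "vec.dim (fixed_space H \<rho>) = 1"
    and ratc: "\<forall>g\<in>carrier G. character \<rho> g \<in> \<rat>"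
begin

lemma R: "is_rep G \<rho>" using irr unfolding irreducible_rep_def by blast

definition wc :: "'g \<Rightarrow> complex" where
  "wc g = of_nat CARD('m) / of_nat (card (carrier G)) * character \<rho> (inv g)"

lemma cardG: "card (carrier G) > 0" using finG one_closed card_gt_0_iff by blast

lemma eW_id: "grp_alg_map G \<rho> wc x = x"
proof (rule cvec_eq_iff[THEN iffD2], rule allI)
  fix j
  define d :: complex where "d = of_nat CARD('m)"
  define N :: complex where "N = of_nat (card (carrier G))"
  have N0: "N \<noteq> 0" using cardG unfolding N_def by simp
  have d0: "d \<noteq> 0" unfolding d_def by simp
  have "grp_alg_map G \<rho> wc x $ j = (\<Sum>g\<in>carrier G. wc g * (\<Sum>l\<in>UNIV. \<rho> g $ j $ l * x $ l))"
    by (simp add: grp_alg_map_def sum_component vector_scalar_mult_def matrix_vector_mult_def)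
  also have "\<dots> = (\<Sum>g\<in>carrier G. \<Sum>l\<in>UNIV. \<Sum>k\<in>UNIV. d / N * x $ l * (\<rho> g $ j $ l * \<rho> (inv g) $ k $ k))"
  proof (rule sum.cong[OF refl])
    fix g
    have "wc g * (\<Sum>l\<in>UNIV. \<rho> g $ j $ l * x $ l) = d / N * ((\<Sum>k\<in>UNIV. \<rho> (inv g) $ k $ k) * (\<Sum>l\<in>UNIV. \<rho> g $ j $ l * x $ l))"
      by (simp add: wc_def character_def trace_def d_def N_def)
    also have "\<dots> = d / N * (\<Sum>k\<in>UNIV. \<Sum>l\<in>UNIV. \<rho> (inv g) $ k $ k * (\<rho> g $ j $ l * x $ l))"
      by (simp add: sum_product)
    also have "\<dots> = d / N * (\<Sum>l\<in>UNIV. \<Sum>k\<in>UNIV. \<rho> (inv g) $ k $ k * (\<rho> g $ j $ l * x $ l))"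
      by (subst sum.swap) (rule refl)
    also have "\<dots> = (\<Sum>l\<in>UNIV. \<Sum>k\<in>UNIV. d / N * x $ l * (\<rho> g $ j $ l * \<rho> (inv g) $ k $ k))"
      by (simp add: sum_distrib_left mult_ac)
    finally show "wc g * (\<Sum>l\<in>UNIV. \<rho> g $ j $ l * x $ l) = (\<Sum>l\<in>UNIV. \<Sum>k\<in>UNIV. d / N * x $ l * (\<rho> g $ j $ l * \<rho> (inv g) $ k $ k))" .
  qed
  also have "\<dots> = (\<Sum>l\<in>UNIV. \<Sum>k\<in>UNIV. d / N * x $ l * (\<Sum>g\<in>carrier G. \<rho> g $ j $ l * \<rho> (inv g) $ k $ k))"
    by (simp add: sum_distrib_left sum.swap[of _ "carrier G"])
  also have "\<dots> = (\<Sum>l\<in>UNIV. \<Sum>k\<in>UNIV. d / N * x $ l * (if j = k \<and> l = k then N / d else 0))"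
    unfolding d_def N_def by (simp add: orth[OF irr])
  also have "\<dots> = (\<Sum>l\<in>UNIV. if l = j then x $ l else 0)"
  proof (rule sum.cong[OF refl])
    fix l
    show "(\<Sum>k\<in>UNIV. d / N * x $ l * (if j = k \<and> l = k then N / d else 0)) = (if l = j then x $ l else 0)"
    proof (cases "l = j")
      case True
      have "(\<Sum>k\<in>UNIV. d / N * x $ l * (if j = k \<and> l = k then N / d else 0)) =
            (\<Sum>k\<in>UNIV. if k = j then d / N * x $ l * (N / d) else 0)"
        by (rule sum.cong) (auto simp: True)
      thus ?thesis using True N0 d0 by simp
    next
      case False thus ?thesis by (auto intro!: sum.neutral)
    qed
  qed
  also have "\<dots> = x $ j" by simp
  finally show "grp_alg_map G \<rho> wc x $ j = x $ j" .
qed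

definition P where "P = grp_alg_map G \<rho> (qc H)"

lemma fs_P: "fixed_space H \<rho> = {x. P x = x}"
  unfolding P_def by (rule fixed_space_pH[OF R])

lemma fs_sub: "vec.subspace (fixed_space H \<rho>)"
  unfolding fs_P vec.subspace_def P_def by (simp add: Aop_add Aop_smult Aop_zero)

lemma exv: "\<exists>v. v \<noteq> 0 \<and> P v = v \<and> (\<forall>x. P x = x \<longrightarrow> (\<exists>c. x = c *s v))"
proof -
  obtain B where B: "B \<subseteq> fixed_space H \<rho>" "vec.independent B" "fixed_space H \<rho> \<subseteq> vec.span B"
    "card B = vec.dim (fixed_space H \<rho>)"
    using vec.basis_exists by blast
  have "\<exists>v. B = {v}" using card1_singleton[of B] dim1 B(4) by simp
  then obtain v where v: "B = {v}" by blast
  have "v \<noteq> 0" using B(2) v vec.dependent_zero by blast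
  moreover have "P v = v" using B(1) v fs_P by auto
  moreover have "\<exists>c. x = c *s v" if "P x = x" for x
  proof -
    have "x \<in> vec.span {v}" using that B(3) v fs_P by auto
    thus ?thesis by (auto simp: vec.span_singleton)
  qed
  ultimately show ?thesis by blast
qed

definition v where "v = (SOME v. v \<noteq> 0 \<and> P v = v \<and> (\<forall>x. P x = x \<longrightarrow> (\<exists>c. x = c *s v)))"

lemma v: "v \<noteq> 0" "P v = v" "\<And>x. P x = x \<Longrightarrow> \<exists>c. x = c *s v"
  using someI_ex[OF exv] unfolding v_def[symmetric] by blast+

definition i0 where "i0 = (SOME i. v $ i \<noteq> 0)"
lemma i0: "v $ i0 \<noteq> 0"
proof -
  have "\<exists>i. v $ i \<noteq> 0" using v(1) by (simp add: cvec_eq_iff)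
  thus ?thesis unfolding i0_def by (rule someI_ex)
qed

lemma in_span_v: assumes "P x = x" shows "x = (x $ i0 / v $ i0) *s v"
proof -
  obtain c where c: "x = c *s v" using v(3)[OF assms] by blast
  hence "x $ i0 = c * v $ i0" by (simp add: vector_scalar_mult_def)
  hence "c = x $ i0 / v $ i0" using i0 by (simp add: field_simps)
  thus ?thesis using c by simp
qed

lemma P_rank1: "P x = ((P x) $ i0 / v $ i0) *s v"
  by (rule in_span_v) (simp add: P_def pH_idem[OF R])

lemma trace_P: "trace (Mq \<rho> (qc H)) = 1"
proof -
  have "trace (Mq \<rho> (qc H)) = (\<Sum>i\<in>UNIV. (P (axis i 1)) $ i)"
    unfolding trace_def P_def Mq_mv[symmetric] by (simp add: mv_axis)
  also have "\<dots> = (\<Sum>i\<in>UNIV. v $ i * (P (axis i 1)) $ i0) / v $ i0"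
    by (subst P_rank1) (simp add: vector_scalar_mult_def sum_divide_distrib mult.commute)
  also have "(\<Sum>i\<in>UNIV. v $ i * (P (axis i 1)) $ i0) = (P (\<Sum>i\<in>UNIV. v $ i *s axis i 1)) $ i0"
    by (simp only: P_def Aop_sum Aop_smult sum_component) (simp add: vector_scalar_mult_def)
  also have "(\<Sum>i\<in>UNIV. v $ i *s axis i 1) = v" by (rule basis_expansion)
  finally show ?thesis using v(2) i0 by simp
qed

lemma qD_rank1: assumes D: "D \<in> double_cosets G H"
  shows "grp_alg_map G \<rho> (qc D) x = chi_avg \<rho> H D *s P x"
proof -
  define Q where "Q = grp_alg_map G \<rho> (qc D)"
  have PQ: "P (Q y) = Q y" for y unfolding P_def Q_def by (rule pH_qD[OF R D])
  have QP: "Q (P y) = Q y" for y unfolding P_def Q_def by (rule qD_pH[OF R D])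
  define lam where "lam = (Q v) $ i0 / v $ i0"
  have Qv: "Q v = lam *s v" unfolding lam_def by (rule in_span_v[OF PQ])
  have Qx: "Q y = lam *s P y" for y
  proof -
    have "Q y = Q (P y)" by (simp add: QP)
    also have "\<dots> = ((P y) $ i0 / v $ i0) *s Q v" by (subst P_rank1) (simp add: Q_def Aop_smult)
    also have "\<dots> = lam *s (((P y) $ i0 / v $ i0) *s v)" by (simp add: Qv vec.scale_scale mult.commute)
    also have "\<dots> = lam *s P y" by (subst (2) P_rank1) simp
    finally show ?thesis .
  qed
  have MqD: "Mq \<rho> (qc D) = (\<chi> i j. lam * Mq \<rho> (qc H) $ i $ j)"
  proof (rule cvec_eq_iff[THEN iffD2], rule allI, rule cvec_eq_iff[THEN iffD2], rule allI)
    fix i j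
    show "Mq \<rho> (qc D) $ i $ j = (\<chi> i j. lam * Mq \<rho> (qc H) $ i $ j) $ i $ j"
      using Qx[of "axis j 1"] mv_axis[of "Mq \<rho> (qc D)" j i] mv_axis[of "Mq \<rho> (qc H)" j i]
      by (simp add: Mq_mv Q_def P_def vector_scalar_mult_def)
  qed
  have "trace (Mq \<rho> (qc D)) = lam * trace (Mq \<rho> (qc H))"
    by (simp add: MqD trace_def sum_distrib_left)
  hence "trace (Mq \<rho> (qc D)) = lam" using trace_P by simp
  moreover have "trace (Mq \<rho> (qc D)) = chi_avg \<rho> H D"
  proof -
    have "trace (Mq \<rho> (qc D)) = (\<Sum>g\<in>carrier G. qc D g * character \<rho> g)"
      by (simp add: trace_Mq character_def)
    also have "\<dots> = chi_avg \<rho> H D" by (simp add: sum_qc[OF dcs_sub[OF D]] chi_avg_def)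
    finally show ?thesis .
  qed
  ultimately have "lam = chi_avg \<rho> H D" by simp
  thus ?thesis using Qx Q_def by simp
qed

end


lemma common_denom:
  fixes a :: "'k \<Rightarrow> complex"
  assumes "finite S" "\<forall>k\<in>S. a k \<in> \<rat>"
  shows "\<exists>N::int. N > 0 \<and> (\<forall>k\<in>S. of_int N * a k \<in> \<int>)"
  using assms
proof (induct S rule: finite_induct)
  case empty thus ?case by (intro exI[of _ 1]) simp
next
  case (insert x F)
  then obtain N where N: "N > 0" "\<forall>k\<in>F. of_int N * a k \<in> \<int>" by auto
  have "a x \<in> \<rat>" using insert by simp
  then obtain p q where pq: "q > 0" "a x = of_int p / of_int q" by (rule Rats_cases') blast
  have "of_int (N * q) * a k \<in> \<int>" if "k \<in> insert x F" for k
  proof (cases "k = x")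
    case True
    have q0: "(of_int q :: complex) \<noteq> 0" using pq by simp
    have "of_int (N * q) * a k = (of_int (N * p) :: complex)" using True pq q0 by (simp add: field_simps)
    thus ?thesis by (simp only: Ints_of_int)
  next
    case False
    hence "k \<in> F" using that by simp
    hence "of_int q * (of_int N * a k) \<in> \<int>" using N by (simp add: Ints_mult)
    thus ?thesis by (simp add: mult_ac)
  qed
  thus ?case using N pq by (intro exI[of _ "N * q"]) simp
qed

lemma rat_int_bound:
  fixes lam :: complex and N :: int
  assumes lam: "lam \<in> \<rat>" and N: "N > 0" and h: "\<And>n. of_int N * lam ^ n \<in> \<int>"
  shows "lam \<in> \<int>"
proof -
  obtain a b where ab: "b > 0" "coprime a b" "lam = of_int a / of_int b" using lam by (rule Rats_cases') blast
  have dv: "b ^ n dvd N" for n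
  proof -
    obtain m where m: "of_int N * lam ^ n = (of_int m :: complex)" using h[of n] by (auto elim: Ints_cases)
    hence "of_int N * (of_int a) ^ n = (of_int m :: complex) * (of_int b) ^ n"
      using ab by (simp add: power_divide field_simps)
    hence "N * a ^ n = m * b ^ n" by (metis of_int_eq_iff of_int_mult of_int_power)
    hence "b ^ n dvd N * a ^ n" by simp
    moreover have "coprime (b ^ n) (a ^ n)" using ab(2) by (simp add: coprime_commute)
    ultimately show ?thesis by (simp add: coprime_dvd_mult_left_iff)
  qed
  have "b = 1"
  proof (rule ccontr)
    assume "b \<noteq> 1"
    hence b2: "b \<ge> 2" using ab by simp
    define n where "n = nat N"
    have "b ^ n \<le> N" using dv[of n] N by (simp add: zdvd_imp_le)
    moreover have "2 ^ n \<le> b ^ n" using b2 by (simp add: power_mono)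
    moreover have "int n < 2 ^ n"
    proof -
      have "int n < int (2 ^ n)" using less_exp[of n] by linarith
      thus ?thesis by simp
    qed
    ultimately show False using N unfolding n_def by simp
  qed
  thus ?thesis using ab by simp
qed

lemma int_from_module:
  fixes lam :: complex and a :: "'k \<Rightarrow> complex"
  assumes S: "finite S" and e: "e \<in> S" "a e = 1" and rat: "\<forall>k\<in>S. a k \<in> \<rat>" and lam: "lam \<in> \<rat>"
    and step: "\<forall>k\<in>S. \<exists>c::'k \<Rightarrow> int. lam * a k = (\<Sum>j\<in>S. of_int (c j) * a j)"
  shows "lam \<in> \<int>"
proof -
  define Lam where "Lam = {z. \<exists>c::'k \<Rightarrow> int. z = (\<Sum>j\<in>S. of_int (c j) * a j)}"
  obtain d where d: "\<forall>k\<in>S. lam * a k = (\<Sum>j\<in>S. of_int (d k j) * a j)"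
    using bchoice[OF step] by blast
  have cl: "lam * z \<in> Lam" if "z \<in> Lam" for z
  proof -
    from that obtain c where c: "z = (\<Sum>j\<in>S. of_int (c j) * a j)" unfolding Lam_def by blast
    have "lam * z = (\<Sum>k\<in>S. of_int (c k) * (lam * a k))"
      by (simp add: c sum_distrib_left mult_ac)
    also have "\<dots> = (\<Sum>k\<in>S. \<Sum>j\<in>S. of_int (c k * d k j) * a j)"
      by (rule sum.cong[OF refl]) (simp add: d sum_distrib_left mult_ac)
    also have "\<dots> = (\<Sum>j\<in>S. \<Sum>k\<in>S. of_int (c k * d k j) * a j)" by (rule sum.swap)
    also have "\<dots> = (\<Sum>j\<in>S. of_int (\<Sum>k\<in>S. c k * d k j) * a j)"
      by (simp add: sum_distrib_right)
    finally have "lam * z = (\<Sum>j\<in>S. of_int (\<Sum>k\<in>S. c k * d k j) * a j)" .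
    hence "\<exists>c'::'k\<Rightarrow>int. lam * z = (\<Sum>j\<in>S. of_int (c' j) * a j)" by (rule exI[where x="\<lambda>j. \<Sum>k\<in>S. c k * d k j"])
    thus ?thesis unfolding Lam_def by simp
  qed
  have pw: "lam ^ n \<in> Lam" for n
  proof (induct n)
    case 0
    have "(1::complex) = (\<Sum>j\<in>S. of_int (if j = e then 1 else 0) * a j)"
      using S e by (simp add: if_distrib if_distribR cong: if_cong)
    thus ?case unfolding Lam_def by auto
  next
    case (Suc n) thus ?case using cl by simp
  qed
  obtain N where N: "N > 0" "\<forall>k\<in>S. of_int N * a k \<in> \<int>" using common_denom[OF S rat] by blast
  have "of_int N * z \<in> \<int>" if "z \<in> Lam" for z
  proof -
    from that obtain c where c: "z = (\<Sum>j\<in>S. of_int (c j) * a j)" unfolding Lam_def by blast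
    have "of_int N * z = (\<Sum>j\<in>S. of_int (c j) * (of_int N * a j))" by (simp add: c sum_distrib_left mult_ac)
    also have "\<dots> \<in> \<int>"
    proof (rule Ints_sum)
      fix j assume j: "j \<in> S"
      have "of_int N * a j \<in> \<int>" using N(2) j by blast
      thus "of_int (c j) * (of_int N * a j) \<in> \<int>" using Ints_mult Ints_of_int by blast
    qed
    finally show ?thesis .
  qed
  thus ?thesis using rat_int_bound[OF lam N(1)] pw by blast
qed


context gh begin

lemma sum_H_lmult: "h \<in> H \<Longrightarrow> (\<Sum>h'\<in>H. f (h \<otimes> h')) = (\<Sum>h'\<in>H. f h')"
  by (rule sum.reindex_bij_witness[where i="\<lambda>k. inv h \<otimes> k" and j="\<lambda>k. h \<otimes> k"])
     (auto simp: H_car H_mult H_inv)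

lemma sum_H_rmult: "h \<in> H \<Longrightarrow> (\<Sum>h'\<in>H. f (h' \<otimes> h)) = (\<Sum>h'\<in>H. f h')"
  by (rule sum.reindex_bij_witness[where i="\<lambda>k. k \<otimes> inv h" and j="\<lambda>k. k \<otimes> h"])
     (auto simp: H_car H_mult H_inv m_assoc)

lemma convH_left_inv: assumes k: "k \<in> carrier G" and h: "h \<in> H"
  shows "conv (qc H) b (h \<otimes> k) = conv (qc H) b k"
proof -
  have hc: "h \<in> carrier G" using h H_car by blast
  have "(\<Sum>h'\<in>H. b (inv h' \<otimes> (h \<otimes> k))) = (\<Sum>h'\<in>H. b (inv (h \<otimes> h') \<otimes> (h \<otimes> k)))"
    by (rule sum_H_lmult[OF h, symmetric])
  also have "\<dots> = (\<Sum>h'\<in>H. b (inv h' \<otimes> k))"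
    by (rule sum.cong[OF refl]) (simp add: hc k H_car inv_mult_group m_assoc)
  finally show ?thesis using k hc by (simp add: convH_left)
qed

lemma convH_right_inv: assumes k: "k \<in> carrier G" and h: "h \<in> H"
  shows "conv a (qc H) (k \<otimes> h) = conv a (qc H) k"
proof -
  have hc: "h \<in> carrier G" using h H_car by blast
  have "(\<Sum>h'\<in>H. a (k \<otimes> h \<otimes> inv h')) = (\<Sum>h'\<in>H. a (k \<otimes> h \<otimes> inv (h' \<otimes> h)))"
    by (rule sum_H_rmult[OF h, symmetric])
  also have "\<dots> = (\<Sum>h'\<in>H. a (k \<otimes> inv h'))"
    by (rule sum.cong[OF refl]) (simp add: hc k H_car inv_mult_group m_assoc)
  finally show ?thesis using k hc by (simp add: convH_right)
qed

lemma conv_mem_carrier: "conv a b k = conv a b k" ..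

end

context ghr begin

lemma MqD_eq: assumes D: "D \<in> double_cosets G H"
  shows "Mq \<rho> (qc D) = (\<chi> i j. chi_avg \<rho> H D * Mq \<rho> (qc H) $ i $ j)"
proof (rule cvec_eq_iff[THEN iffD2], rule allI, rule cvec_eq_iff[THEN iffD2], rule allI)
  fix i j
  show "Mq \<rho> (qc D) $ i $ j = (\<chi> i j. chi_avg \<rho> H D * Mq \<rho> (qc H) $ i $ j) $ i $ j"
    using qD_rank1[OF D, of "axis j 1"] mv_axis[of "Mq \<rho> (qc D)" j i] mv_axis[of "Mq \<rho> (qc H)" j i]
    by (simp add: Mq_mv P_def vector_scalar_mult_def)
qed

lemma trace_scaled: "trace (A ** (\<chi> i j. c * B $ i $ j)) = c * trace (A ** (B::complex^'m^'m))"
  by (simp add: trace_def matrix_matrix_mult_def sum_distrib_left mult_ac)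

lemma trace_rho_Mq: assumes k: "k \<in> carrier G" and D: "D \<subseteq> carrier G"
  shows "trace (\<rho> k ** Mq \<rho> (qc D)) = (1 / of_nat (card H)) * (\<Sum>y\<in>D. character \<rho> (k \<otimes> y))"
proof -
  have "trace (\<rho> k ** Mq \<rho> (qc D)) = (\<Sum>g\<in>carrier G. qc D g * character \<rho> (k \<otimes> g))"
    unfolding trace_Mq_mult
    by (rule sum.cong[OF refl]) (simp add: character_def rep_mult[OF R k])
  also have "\<dots> = (1 / of_nat (card H)) * (\<Sum>y\<in>D. character \<rho> (k \<otimes> y))"
    by (rule sum_qc[OF D])
  finally show ?thesis .
qed

definition av where "av k = trace (\<rho> k ** Mq \<rho> (qc H))"

lemma av_one: "av \<one> = 1"
  unfolding av_def using trace_P by (simp add: rep_one[OF R])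

lemma chi_rat: assumes D: "D \<subseteq> carrier G" shows "chi_avg \<rho> H D \<in> \<rat>"
  unfolding chi_avg_def using D ratc by (intro Rats_mult Rats_sum) auto

lemma av_rat: assumes k: "k \<in> carrier G" shows "av k \<in> \<rat>"
  unfolding av_def trace_rho_Mq[OF k H_sub] using k ratc H_car by (intro Rats_mult Rats_sum) auto

lemma av_step: assumes D: "D \<in> double_cosets G H" and k: "k \<in> carrier G"
  shows "chi_avg \<rho> H D * av k = (\<Sum>C\<in>LC D. av (k \<otimes> lrep C))"
proof -
  have "chi_avg \<rho> H D * av k = trace (\<rho> k ** Mq \<rho> (qc D))"
    by (simp only: av_def MqD_eq[OF D] trace_scaled)
  also have "\<dots> = (1 / of_nat (card H)) * (\<Sum>y\<in>D. character \<rho> (k \<otimes> y))"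
    by (rule trace_rho_Mq[OF k dcs_sub[OF D]])
  also have "(\<Sum>y\<in>D. character \<rho> (k \<otimes> y)) = (\<Sum>C\<in>LC D. \<Sum>h\<in>H. character \<rho> (k \<otimes> (lrep C \<otimes> h)))"
    by (rule sum_LC[OF D])
  also have "(1 / of_nat (card H)) * \<dots> = (\<Sum>C\<in>LC D. (1 / of_nat (card H)) * (\<Sum>h\<in>H. character \<rho> (k \<otimes> (lrep C \<otimes> h))))"
    by (rule sum_distrib_left)
  also have "\<dots> = (\<Sum>C\<in>LC D. av (k \<otimes> lrep C))"
  proof (rule sum.cong[OF refl])
    fix C assume C: "C \<in> LC D"
    have r: "lrep C \<in> carrier G" by (rule LC_props(2)[OF D C])
    show "1 / of_nat (card H) * (\<Sum>h\<in>H. character \<rho> (k \<otimes> (lrep C \<otimes> h))) = av (k \<otimes> lrep C)"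
      unfolding av_def trace_rho_Mq[OF m_closed[OF k r] H_sub]
      using k r H_car by (simp add: m_assoc)
  qed
  finally show ?thesis .
qed

lemma LC_inj: assumes D: "D \<in> double_cosets G H" and k: "k \<in> carrier G"
  shows "inj_on (\<lambda>C. k \<otimes> lrep C) (LC D)"
proof (rule inj_onI)
  fix C1 C2 assume C1: "C1 \<in> LC D" and C2: "C2 \<in> LC D" and eq: "k \<otimes> lrep C1 = k \<otimes> lrep C2"
  have "lrep C1 = lrep C2" using eq k LC_props(2)[OF D C1] LC_props(2)[OF D C2] by simp
  thus "C1 = C2" using LC_props(3)[OF D C1] LC_props(3)[OF D C2] by simp
qed

lemma chi_int: assumes D: "D \<in> double_cosets G H" shows "chi_avg \<rho> H D \<in> \<int>"
proof (rule int_from_module[where S="carrier G" and e="\<one>" and a=av, OF finG one_closed av_one])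
  show "\<forall>k\<in>carrier G. av k \<in> \<rat>" using av_rat by blast
  show "chi_avg \<rho> H D \<in> \<rat>" by (rule chi_rat[OF dcs_sub[OF D]])
  show "\<forall>k\<in>carrier G. \<exists>c::'g\<Rightarrow>int. chi_avg \<rho> H D * av k = (\<Sum>j\<in>carrier G. of_int (c j) * av j)"
  proof
    fix k assume k: "k \<in> carrier G"
    define T where "T = (\<lambda>C. k \<otimes> lrep C) ` LC D"
    have T: "T \<subseteq> carrier G" unfolding T_def using LC_props(2)[OF D] k by auto
    have "chi_avg \<rho> H D * av k = (\<Sum>j\<in>T. av j)"
      unfolding av_step[OF D k] T_def by (simp add: sum.reindex[OF LC_inj[OF D k]])
    also have "\<dots> = (\<Sum>j\<in>carrier G. of_int (if j \<in> T then 1 else 0) * av j)"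
    proof -
      have "(\<Sum>j\<in>carrier G. of_int (if j \<in> T then 1 else 0) * av j) = (\<Sum>j\<in>carrier G. if j \<in> T then av j else 0)"
        by (rule sum.cong) auto
      also have "\<dots> = (\<Sum>j\<in>carrier G \<inter> T. av j)" by (rule sum.inter_restrict[symmetric, OF finG])
      also have "carrier G \<inter> T = T" using T by blast
      finally show ?thesis by simp
    qed
    finally show "\<exists>c::'g\<Rightarrow>int. chi_avg \<rho> H D * av k = (\<Sum>j\<in>carrier G. of_int (c j) * av j)"
      by (rule exI[where x="\<lambda>j. if j \<in> T then 1 else 0"])
  qed
qed

lemma conv_trace: assumes D: "D \<subseteq> carrier G" and k: "k \<in> carrier G"
  shows "conv (qc D) wc k = of_nat CARD('m) / of_nat (card (carrier G)) * trace (\<rho> (inv k) ** Mq \<rho> (qc D))"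
proof -
  have "conv (qc D) wc k = (\<Sum>g\<in>carrier G. qc D g * (of_nat CARD('m) / of_nat (card (carrier G)) * trace (\<rho> (inv k) ** \<rho> g)))"
    unfolding conv_def
    by (rule sum.cong[OF refl]) (simp add: wc_def character_def k inv_mult_group rep_mult[OF R])
  also have "\<dots> = of_nat CARD('m) / of_nat (card (carrier G)) * trace (\<rho> (inv k) ** Mq \<rho> (qc D))"
    by (simp add: trace_Mq_mult sum_distrib_left mult_ac)
  finally show ?thesis .
qed

lemma conv_qD_wc: assumes D: "D \<in> double_cosets G H" and k: "k \<in> carrier G"
  shows "conv (qc D) wc k = chi_avg \<rho> H D * conv (qc H) wc k"
  using conv_trace[OF dcs_sub[OF D] k] conv_trace[OF H_sub k]
  by (simp add: MqD_eq[OF D] trace_scaled)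

lemma M_eig: assumes M: "is_rep G M" and D: "D \<in> double_cosets G H"
  shows "grp_alg_map G M (qc D) (grp_alg_map G M (qc H) (grp_alg_map G M wc x))
       = chi_avg \<rho> H D *s grp_alg_map G M (qc H) (grp_alg_map G M wc (x::complex^'n))"
proof -
  have "grp_alg_map G M (qc D) (grp_alg_map G M (qc H) (grp_alg_map G M wc x)) = grp_alg_map G M (qc D) (grp_alg_map G M wc x)"
    by (rule qD_pH[OF M D])
  also have "\<dots> = grp_alg_map G M (conv (qc D) wc) x" by (rule Aop_conv[OF M])
  also have "\<dots> = grp_alg_map G M (\<lambda>k. chi_avg \<rho> H D * conv (qc H) wc k) x"
    by (rule Aop_cong) (rule conv_qD_wc[OF D])
  also have "\<dots> = chi_avg \<rho> H D *s grp_alg_map G M (conv (qc H) wc) x" by (rule Aop_coef_smult)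
  also have "\<dots> = chi_avg \<rho> H D *s grp_alg_map G M (qc H) (grp_alg_map G M wc x)"
    by (simp add: Aop_conv[OF M])
  finally show ?thesis .
qed

definition uc where "uc = conv (qc H) (conv wc (qc H))"

lemma uc_l: "h \<in> H \<Longrightarrow> k \<in> carrier G \<Longrightarrow> uc (h \<otimes> k) = uc k"
  unfolding uc_def by (rule convH_left_inv)

lemma uc_r: assumes h: "h \<in> H" and k: "k \<in> carrier G" shows "uc (k \<otimes> h) = uc k"
proof -
  have hc: "h \<in> carrier G" using h H_car by blast
  have "uc (k \<otimes> h) = (1 / of_nat (card H)) * (\<Sum>h'\<in>H. conv wc (qc H) (inv h' \<otimes> (k \<otimes> h)))"
    unfolding uc_def by (rule convH_left[OF m_closed[OF k hc]])
  also have "(\<Sum>h'\<in>H. conv wc (qc H) (inv h' \<otimes> (k \<otimes> h))) = (\<Sum>h'\<in>H. conv wc (qc H) (inv h' \<otimes> k))"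
  proof (rule sum.cong[OF refl])
    fix h' assume h': "h' \<in> H"
    have hc': "inv h' \<otimes> k \<in> carrier G" using h' k H_car by simp
    have "inv h' \<otimes> (k \<otimes> h) = (inv h' \<otimes> k) \<otimes> h" using h' k hc H_car by (simp add: m_assoc)
    thus "conv wc (qc H) (inv h' \<otimes> (k \<otimes> h)) = conv wc (qc H) (inv h' \<otimes> k)"
      using convH_right_inv[OF hc' h] by simp
  qed
  also have "(1 / of_nat (card H)) * (\<Sum>h'\<in>H. conv wc (qc H) (inv h' \<otimes> k)) = uc k"
    unfolding uc_def by (rule convH_left[OF k, symmetric])
  finally show ?thesis .
qed

definition sc where "sc = (\<Sum>D\<in>double_cosets G H. uc (drep D) * of_nat (card H) * chi_avg \<rho> H D)"

lemma Aop_uc: assumes M: "is_rep G M"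
  shows "grp_alg_map G M uc x = grp_alg_map G M (qc H) (grp_alg_map G M wc (grp_alg_map G M (qc H) (x::complex^'k)))"
  unfolding uc_def by (simp add: Aop_conv[OF M])

lemma uc_expand: assumes M: "is_rep G M" and eig: "\<And>D. D \<in> double_cosets G H \<Longrightarrow> grp_alg_map G M (qc D) x = chi_avg \<rho> H D *s x"
  shows "grp_alg_map G M uc x = sc *s (x::complex^'k)"
proof -
  have "grp_alg_map G M uc x = (\<Sum>D\<in>double_cosets G H. (uc (drep D) * of_nat (card H)) *s grp_alg_map G M (qc D) x)"
    by (rule Aop_biinv[OF M uc_l uc_r])
  also have "\<dots> = (\<Sum>D\<in>double_cosets G H. (uc (drep D) * of_nat (card H) * chi_avg \<rho> H D) *s x)"
    by (rule sum.cong[OF refl]) (simp add: eig vec.scale_scale)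
  also have "\<dots> = sc *s x" unfolding sc_def by (simp add: vec.scale_sum_left)
  finally show ?thesis .
qed

lemma sc_one: "sc = 1"
proof -
  have "grp_alg_map G \<rho> uc v = sc *s v"
  proof (rule uc_expand[OF R])
    fix D assume D: "D \<in> double_cosets G H"
    show "grp_alg_map G \<rho> (qc D) v = chi_avg \<rho> H D *s v" using qD_rank1[OF D, of v] v(2) by simp
  qed
  moreover have "grp_alg_map G \<rho> uc v = v"
    using Aop_uc[OF R, of v] v(2) eW_id unfolding P_def by simp
  ultimately have "sc *s v = v" by simp
  hence "(sc - 1) *s v = 0" by (simp add: vec.scale_left_diff_distrib)
  hence "sc - 1 = 0" using v(1) vec.scale_eq_0_iff by blast
  thus ?thesis by simp
qed

lemma M_fix: assumes M: "is_rep G M" and pH: "grp_alg_map G M (qc H) x = x"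
  and eig: "\<And>D. D \<in> double_cosets G H \<Longrightarrow> grp_alg_map G M (qc D) x = chi_avg \<rho> H D *s x"
  shows "grp_alg_map G M (qc H) (grp_alg_map G M wc x) = (x::complex^'n)"
  using Aop_uc[OF M, of x] uc_expand[OF M eig] sc_one pH by simp

end


locale lat =
  fixes L :: "(complex^'n) set"
  assumes L0: "0 \<in> L" and Ladd: "\<And>a b. a \<in> L \<Longrightarrow> b \<in> L \<Longrightarrow> a + b \<in> L"
    and Lneg: "\<And>a. a \<in> L \<Longrightarrow> - a \<in> L"
begin

lemma Ldiff: "a \<in> L \<Longrightarrow> b \<in> L \<Longrightarrow> a - b \<in> L"
proof -
  assume a: "a \<in> L" and b: "b \<in> L"
  have "a + - b \<in> L" using Ladd[OF a Lneg[OF b]] .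
  thus ?thesis by simp
qed

lemma tpt_mem: "x \<in> tpt L x" unfolding tpt_def using L0 by force

lemma tpt_eq: "tpt L x = tpt L y \<longleftrightarrow> x - y \<in> L"
proof
  assume "tpt L x = tpt L y"
  hence "x \<in> tpt L y" using tpt_mem by blast
  then obtain l where "l \<in> L" "x = y + l" unfolding tpt_def by blast
  thus "x - y \<in> L" by simp
next
  assume d: "x - y \<in> L"
  show "tpt L x = tpt L y"
  proof
    show "tpt L x \<subseteq> tpt L y"
    proof
      fix z assume "z \<in> tpt L x"
      then obtain l where l: "l \<in> L" "z = x + l" unfolding tpt_def by blast
      hence "z = y + ((x - y) + l)" by simp
      moreover have "(x - y) + l \<in> L" using Ladd d l by blast
      ultimately show "z \<in> tpt L y" unfolding tpt_def by blast
    qed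
    show "tpt L y \<subseteq> tpt L x"
    proof
      fix z assume "z \<in> tpt L y"
      then obtain l where l: "l \<in> L" "z = y + l" unfolding tpt_def by blast
      hence "z = x + (l - (x - y))" by simp
      moreover have "l - (x - y) \<in> L" using Ldiff d l by blast
      ultimately show "z \<in> tpt L x" unfolding tpt_def by blast
    qed
  qed
qed

lemma istop: "istopology (\<lambda>U. U \<subseteq> range (tpt L) \<and> open (tpt L -` U))"
  unfolding istopology_def by (auto simp: vimage_Union intro!: open_Union)

lemma torus_open: "openin (torus_top L) U \<longleftrightarrow> U \<subseteq> range (tpt L) \<and> open (tpt L -` U)"
  unfolding torus_top_def using istop by simp

lemma torus_topspace: "topspace (torus_top L) = range (tpt L)"
proof -
  have "tpt L -` range (tpt L) = UNIV" by auto
  hence "openin (torus_top L) (range (tpt L))" by (simp add: torus_open)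
  hence "range (tpt L) \<subseteq> topspace (torus_top L)" by (rule openin_subset)
  moreover have "topspace (torus_top L) \<subseteq> range (tpt L)"
    unfolding topspace_def using torus_open by blast
  ultimately show ?thesis by blast
qed

lemma tpt_cont: "continuous_map euclidean (torus_top L) (tpt L)"
  unfolding continuous_map_def torus_topspace
  by (auto simp: torus_open vimage_def)

lemma open_balls: "openin (torus_top L) (tpt L ` (\<Union>x\<in>A. ball x e))"
proof -
  have "tpt L -` (tpt L ` (\<Union>x\<in>A. ball x e)) = (\<Union>x\<in>A. \<Union>l\<in>L. ball (x + l) e)"
  proof (rule equalityI; rule subsetI)
    fix y assume "y \<in> tpt L -` (tpt L ` (\<Union>x\<in>A. ball x e))"
    then obtain x z where xz: "x \<in> A" "z \<in> ball x e" "tpt L y = tpt L z" by auto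
    hence l: "y - z \<in> L" using tpt_eq by blast
    have "dist (x + (y - z)) y = dist x z" by (simp add: dist_norm algebra_simps)
    hence "y \<in> ball (x + (y - z)) e" using xz by simp
    thus "y \<in> (\<Union>x\<in>A. \<Union>l\<in>L. ball (x + l) e)" using xz l by blast
  next
    fix y assume "y \<in> (\<Union>x\<in>A. \<Union>l\<in>L. ball (x + l) e)"
    then obtain x l where xl: "x \<in> A" "l \<in> L" "y \<in> ball (x + l) e" by blast
    have "dist x (y - l) = dist (x + l) y" by (simp add: dist_norm algebra_simps)
    hence "y - l \<in> ball x e" using xl by simp
    moreover have "tpt L y = tpt L (y - l)" using tpt_eq xl by simp
    ultimately show "y \<in> tpt L -` (tpt L ` (\<Union>x\<in>A. ball x e))" using xl by blast
  qed
  moreover have "open (\<Union>x\<in>A. \<Union>l\<in>L. ball (x + l) e)" by (intro open_UN ballI open_ball)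
  ultimately show ?thesis by (simp add: torus_open image_subset_iff)
qed

lemma comp_eq:
  fixes K :: "(complex^'n) set" and S :: "(complex^'n) set set" and e :: real
  assumes Kc: "connected K" and K0: "0 \<in> K" and SR: "S \<subseteq> range (tpt L)" and KS: "tpt L ` K \<subseteq> S"
    and e: "e > 0"
    and key: "\<And>x k b. tpt L x \<in> S \<Longrightarrow> k \<in> K \<Longrightarrow> norm b < e \<Longrightarrow> x - k - b \<in> L \<Longrightarrow> tpt L x \<in> tpt L ` K"
  shows "connected_component_of_set (subtopology (torus_top L) S) (tpt L 0) = tpt L ` K"
proof -
  define X where "X = subtopology (torus_top L) S"
  define C where "C = tpt L ` K"
  have topX: "topspace X = S" unfolding X_def using SR torus_topspace by auto
  have connC: "connectedin X C"
    unfolding X_def C_def connectedin_subtopology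
    using connectedin_continuous_map_image[OF tpt_cont] Kc KS by simp
  have openC: "openin X C"
    unfolding X_def openin_subtopology
  proof (intro exI conjI)
    show "openin (torus_top L) (tpt L ` (\<Union>k\<in>K. ball k e))" by (rule open_balls)
    show "C = tpt L ` (\<Union>k\<in>K. ball k e) \<inter> S"
    proof
      show "C \<subseteq> tpt L ` (\<Union>k\<in>K. ball k e) \<inter> S" using KS e unfolding C_def by force
      show "tpt L ` (\<Union>k\<in>K. ball k e) \<inter> S \<subseteq> C"
      proof
        fix w assume "w \<in> tpt L ` (\<Union>k\<in>K. ball k e) \<inter> S"
        then obtain k z where kz: "k \<in> K" "z \<in> ball k e" "w = tpt L z" "w \<in> S" by blast
        have "norm (z - k) < e" using kz by (simp add: dist_norm norm_minus_commute)
        moreover have "z - k - (z - k) \<in> L" using L0 by simp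
        ultimately show "w \<in> C" unfolding C_def using key[of z k "z - k"] kz by blast
      qed
    qed
  qed
  have openD: "openin X (S - C)"
    unfolding X_def openin_subtopology
  proof (intro exI conjI)
    show "openin (torus_top L) (tpt L ` (\<Union>x\<in>{x. tpt L x \<in> S - C}. ball x e))" by (rule open_balls)
    show "S - C = tpt L ` (\<Union>x\<in>{x. tpt L x \<in> S - C}. ball x e) \<inter> S"
    proof
      show "S - C \<subseteq> tpt L ` (\<Union>x\<in>{x. tpt L x \<in> S - C}. ball x e) \<inter> S"
      proof
        fix w assume w: "w \<in> S - C"
        then obtain x where x: "w = tpt L x" using SR by blast
        thus "w \<in> tpt L ` (\<Union>x\<in>{x. tpt L x \<in> S - C}. ball x e) \<inter> S" using w e by force
      qed
      show "tpt L ` (\<Union>x\<in>{x. tpt L x \<in> S - C}. ball x e) \<inter> S \<subseteq> S - C"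
      proof
        fix w assume "w \<in> tpt L ` (\<Union>x\<in>{x. tpt L x \<in> S - C}. ball x e) \<inter> S"
        then obtain x z where xz: "tpt L x \<in> S" "tpt L x \<notin> C" "z \<in> ball x e" "w = tpt L z" "w \<in> S" by blast
        have "w \<notin> C"
        proof
          assume "w \<in> C"
          then obtain k where k: "k \<in> K" "w = tpt L k" unfolding C_def by blast
          hence "z - k \<in> L" using xz tpt_eq by simp
          moreover have "x - k - (x - z) = z - k" by simp
          moreover have "norm (x - z) < e" using xz by (simp add: dist_norm)
          ultimately have "tpt L x \<in> C" unfolding C_def using key[of x k "x - z"] xz k by simp
          thus False using xz by blast
        qed
        thus "w \<in> S - C" using xz by blast
      qed
    qed
  qed
  have closedC: "closedin X C"
    unfolding closedin_def topX using openD KS unfolding C_def by blast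
  define Z where "Z = connected_component_of_set X (tpt L 0)"
  have Zc: "connectedin X Z" unfolding Z_def by (rule connectedin_connected_component_of)
  have t0: "tpt L 0 \<in> C" unfolding C_def using K0 by blast
  have t0X: "tpt L 0 \<in> topspace X" using t0 KS topX unfolding C_def by blast
  have "tpt L 0 \<in> Z" unfolding Z_def using t0X by (simp add: connected_component_of_refl)
  hence "Z \<subseteq> C" using connectedin_clopen_cases[OF Zc closedC openC] t0 by (auto simp: disjnt_def)
  moreover have "C \<subseteq> Z" unfolding Z_def by (rule connected_component_of_maximal[OF connC t0])
  ultimately show ?thesis unfolding Z_def X_def C_def by blast
qed

end


lemma cscale_real: "(complex_of_real r) *s (x::complex^'n) = r *\<^sub>R x"
  by (rule cvec_eq_iff[THEN iffD2]) (simp add: vector_scalar_mult_def, simp add: scaleR_conv_of_real)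

lemma cscale_int: "(of_int m :: complex) *s (x::complex^'n) = real_of_int m *\<^sub>R x"
  using cscale_real[of "of_int m" x] by simp

lemma lattice_props:
  fixes L :: "(complex^'n) set"
  assumes "is_lattice L"
  shows "lat L" "\<And>l m. l \<in> L \<Longrightarrow> (of_int m :: complex) *s l \<in> L"
    "\<exists>\<delta>>0. \<forall>l\<in>L. norm l < \<delta> \<longrightarrow> l = 0"
proof -
  obtain B where B: "finite B" "independent B" "card B = DIM(complex^'n)"
    "L = {(\<Sum>b\<in>B. of_int (c b) *\<^sub>R b) | c. True}"
    using assms unfolding is_lattice_def by blast
  have mem: "l \<in> L \<longleftrightarrow> (\<exists>c. l = (\<Sum>b\<in>B. of_int (c b) *\<^sub>R b))" for l using B(4) by blast
  show "lat L"
  proof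
    show "0 \<in> L" unfolding mem by (rule exI[of _ "\<lambda>b. 0"]) simp
    fix a b assume "a \<in> L" "b \<in> L"
    then obtain c d where "a = (\<Sum>b\<in>B. of_int (c b) *\<^sub>R b)" "b = (\<Sum>b\<in>B. of_int (d b) *\<^sub>R b)"
      unfolding mem by blast
    hence "a + b = (\<Sum>x\<in>B. of_int (c x + d x) *\<^sub>R x)" by (simp add: sum.distrib scaleR_left_distrib)
    thus "a + b \<in> L" unfolding mem by (rule exI[where x="\<lambda>x. c x + d x"])
  next
    fix a assume "a \<in> L"
    then obtain c where "a = (\<Sum>b\<in>B. of_int (c b) *\<^sub>R b)" unfolding mem by blast
    hence "- a = (\<Sum>x\<in>B. of_int (- c x) *\<^sub>R x)" by (simp add: sum_negf)
    thus "- a \<in> L" unfolding mem by (rule exI[where x="\<lambda>x. - c x"])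
  qed
  show "(of_int m :: complex) *s l \<in> L" if "l \<in> L" for l m
  proof -
    from that obtain c where "l = (\<Sum>b\<in>B. of_int (c b) *\<^sub>R b)" unfolding mem by blast
    hence "(of_int m :: complex) *s l = (\<Sum>x\<in>B. of_int (m * c x) *\<^sub>R x)"
      by (simp add: cscale_int scaleR_sum_right)
    thus ?thesis unfolding mem by (rule exI[where x="\<lambda>x. m * c x"])
  qed
  have spanB: "span B = UNIV"
  proof -
    have "UNIV \<subseteq> span B" using card_eq_dim[of B UNIV] B by (simp add: Euclidean_Space.dim_UNIV)
    thus ?thesis by blast
  qed
  define R where "R b x = representation B x b" for b x
  have bl: "bounded_linear (R b)" for b
  proof -
    have "linear (R b)"
    proof (rule linearI)
      fix x y
      show "R b (x + y) = R b x + R b y" using representation_add[OF B(2)] spanB by (simp add: R_def)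
    next
      fix c x
      show "R b (c *\<^sub>R x) = c *\<^sub>R R b x" using representation_scale[OF B(2)] spanB by (simp add: R_def)
    qed
    thus ?thesis by (simp add: linear_conv_bounded_linear)
  qed
  have "\<forall>b. \<exists>K>0. \<forall>x. norm (R b x) \<le> norm x * K" using bounded_linear.pos_bounded[OF bl] by blast
  then obtain K where K: "\<And>b. K b > 0" "\<And>b x. norm (R b x) \<le> norm x * K b" by metis
  define Ks where "Ks = (\<Sum>b\<in>B. K b) + 1"
  have Ks: "Ks > 0" "\<And>b. b \<in> B \<Longrightarrow> K b \<le> Ks"
  proof -
    have "(\<Sum>b\<in>B. K b) \<ge> 0" using K(1) by (simp add: sum_nonneg less_imp_le)
    thus "Ks > 0" unfolding Ks_def by simp
    fix b assume b: "b \<in> B"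
    have "K b \<le> (\<Sum>b\<in>B. K b)" using b B(1) K(1) by (intro member_le_sum) (auto simp: less_imp_le)
    thus "K b \<le> Ks" unfolding Ks_def by simp
  qed
  show "\<exists>\<delta>>0. \<forall>l\<in>L. norm l < \<delta> \<longrightarrow> l = 0"
  proof (intro exI conjI ballI impI)
    show "1 / Ks > 0" using Ks by simp
    fix l assume l: "l \<in> L" and nl: "norm l < 1 / Ks"
    then obtain c where c: "l = (\<Sum>b\<in>B. of_int (c b) *\<^sub>R b)" unfolding mem by blast
    have Rl: "R b' l = of_int (c b')" if b': "b' \<in> B" for b'
    proof -
      have "R b' l = (\<Sum>b\<in>B. representation B (of_int (c b) *\<^sub>R b) b')"
        unfolding R_def c using representation_sum[OF B(2), of B "\<lambda>b. of_int (c b) *\<^sub>R b"] spanB by simp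
      also have "\<dots> = (\<Sum>b\<in>B. of_int (c b) * (if b' = b then 1 else 0))"
        by (rule sum.cong[OF refl]) (simp add: representation_scale[OF B(2)] representation_basis[OF B(2)] spanB)
      also have "\<dots> = of_int (c b')" using b' B(1) by (simp add: if_distrib cong: if_cong)
      finally show ?thesis .
    qed
    have "c b = 0" if b: "b \<in> B" for b
    proof -
      have "\<bar>of_int (c b)\<bar> \<le> norm l * K b" using K(2)[of b l] Rl[OF b] by simp
      also have "\<dots> \<le> norm l * Ks" using Ks(2)[OF b] by (simp add: mult_left_mono)
      also have "\<dots> < 1" using nl Ks by (simp add: field_simps)
      finally have "\<bar>c b\<bar> < 1" by linarith
      thus ?thesis by simp
    qed
    thus "l = 0" using c by simp
  qed
qed


lemma Lsum: assumes "lat L" "finite S" "\<And>i. i \<in> S \<Longrightarrow> f i \<in> L" shows "sum f S \<in> L"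
  using assms(2,3)
proof (induct S rule: finite_induct)
  case empty thus ?case using lat.L0[OF assms(1)] by simp
next
  case (insert x F) thus ?case using lat.Ladd[OF assms(1)] by simp
qed

lemma clin_bounded:
  fixes f :: "complex^'n \<Rightarrow> complex^'n"
  assumes add: "\<And>x y. f (x + y) = f x + f y" and sc: "\<And>c x. f (c *s x) = c *s f x"
  shows "\<exists>K>0. \<forall>x. norm (f x) \<le> norm x * K"
proof -
  have "linear f"
  proof (rule linearI)
    fix x y show "f (x + y) = f x + f y" by (rule add)
  next
    fix r x show "f (r *\<^sub>R x) = r *\<^sub>R f x" using sc[of "of_real r" x] by (simp add: cscale_real)
  qed
  hence "bounded_linear f" by (simp add: linear_conv_bounded_linear)
  thus ?thesis by (rule bounded_linear.pos_bounded)
qed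

context gh begin

lemma Aop_int_L:
  assumes lat: "lat L" and Lint: "\<And>l m. l \<in> L \<Longrightarrow> (of_int m :: complex) *s l \<in> L"
    and Mp: "\<And>g l. g \<in> carrier G \<Longrightarrow> l \<in> L \<Longrightarrow> M g *v l \<in> L"
    and a: "\<And>g. g \<in> carrier G \<Longrightarrow> a g \<in> \<int>" and l: "l \<in> L"
  shows "grp_alg_map G M a l \<in> (L :: (complex^'n) set)"
  unfolding grp_alg_map_def
proof (rule Lsum[OF lat finG])
  fix g assume g: "g \<in> carrier G"
  obtain m where "a g = of_int m" using a[OF g] by (auto elim: Ints_cases)
  thus "a g *s (M g *v l) \<in> L" using Lint Mp[OF g l] by simp
qed

lemma end_denom_pos:
  assumes lat: "lat L" and Lint: "\<And>l m. l \<in> L \<Longrightarrow> (of_int m :: complex) *s l \<in> L"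
    and Mp: "\<And>g l. g \<in> carrier G \<Longrightarrow> l \<in> L \<Longrightarrow> M g *v l \<in> L"
    and a: "\<And>g. g \<in> carrier G \<Longrightarrow> a g \<in> \<rat>"
  shows "end_denom (L :: (complex^'n) set) (grp_alg_map G M a) > 0"
proof -
  obtain N :: int where N: "N > 0" "\<forall>g\<in>carrier G. of_int N * a g \<in> \<int>"
    using common_denom[OF finG, of a] a by blast
  have "nat N > 0 \<and> (\<forall>l\<in>L. of_nat (nat N) *s grp_alg_map G M a l \<in> L)"
  proof (intro conjI ballI)
    show "nat N > 0" using N by simp
    fix l assume l: "l \<in> L"
    have "of_nat (nat N) *s grp_alg_map G M a l = grp_alg_map G M (\<lambda>g. of_int N * a g) l"
      using N by (simp add: Aop_coef_smult)
    also have "\<dots> \<in> L" by (rule Aop_int_L[OF lat Lint Mp _ l]) (use N in auto)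
    finally show "of_nat (nat N) *s grp_alg_map G M a l \<in> L" .
  qed
  hence "\<exists>n. n > 0 \<and> (\<forall>l\<in>L. of_nat n *s grp_alg_map G M a l \<in> L)" by blast
  from LeastI_ex[OF this] show ?thesis unfolding end_denom_def by blast
qed

lemma av_image_eq:
  assumes n: "end_denom L (grp_alg_map G M a) > 0"
  shows "av_image L (grp_alg_map G M a) = tpt L ` range (grp_alg_map G M a :: complex^'n \<Rightarrow> complex^'n)"
proof -
  define n where "n = end_denom L (grp_alg_map G M a)"
  have n0: "(of_nat n :: complex) \<noteq> 0" using n unfolding n_def by simp
  have "range (\<lambda>x. of_nat n *s grp_alg_map G M a x) = range (grp_alg_map G M a)"
  proof
    show "range (\<lambda>x. of_nat n *s grp_alg_map G M a x) \<subseteq> range (grp_alg_map G M a)"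
      by (auto simp: Aop_smult[symmetric])
    show "range (grp_alg_map G M a) \<subseteq> range (\<lambda>x. of_nat n *s grp_alg_map G M a x)"
    proof
      fix y assume "y \<in> range (grp_alg_map G M a)"
      then obtain x where x: "y = grp_alg_map G M a x" by blast
      have "y = of_nat n *s grp_alg_map G M a ((1 / of_nat n) *s x)"
        using n0 by (simp add: x Aop_smult vec.scale_scale)
      thus "y \<in> range (\<lambda>x. of_nat n *s grp_alg_map G M a x)" by blast
    qed
  qed
  thus ?thesis unfolding av_image_def n_def by simp
qed

end


theorem theorem4p3:
  fixes G :: "('g, 'b) monoid_scheme"
    and H :: "'g set"
    and L :: "(complex^'n) set"
    and M :: "'g \<Rightarrow> complex^'n^'n"
    and \<rho> :: "'g \<Rightarrow> complex^'m^'m"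
  assumes "group G" and "finite (carrier G)"
    and "abelian_variety L"
    and "group_acts_on_av G L M"
    and "subgroup H G"
    and "irreducible_rep G \<rho>"
    and "vec.dim (fixed_space H \<rho>) = 1"
    and "\<forall>g\<in>carrier G. character \<rho> g \<in> \<rat>"
  shows "(\<forall>D\<in>double_cosets G H. chi_avg \<rho> H D \<in> \<int>)
       \<and> (\<forall>D\<in>double_cosets G H.
            avg_map G M H D ` range (avg_map G M H H) \<subseteq> range (avg_map G M H H)
          \<and> (\<forall>l\<in>L \<inter> range (avg_map G M H H). avg_map G M H D l \<in> L))
       \<and> av_image L (avg_map G M H H \<circ> eW_map G M \<rho>) =
           connected_component_of_set
             (subtopology (torus_top L)
                {z \<in> av_image L (avg_map G M H H). \<forall>D\<in>double_cosets G H.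
                    \<exists>x\<in>range (avg_map G M H H).
                      z = tpt L x \<and> tpt L (avg_map G M H D x) = tpt L (chi_avg \<rho> H D *s x)})
             (tpt L 0)"
proof -
  interpret ghr G H \<rho>
    by (rule ghr.intro[OF gh.intro[OF assms(1) gh_axioms.intro[OF assms(2) assms(5)]]
          ghr_axioms.intro[OF assms(6) assms(7) assms(8)]])
  have latt: "is_lattice L" using assms(3) unfolding abelian_variety_def by blast
  interpret lat L by (rule lattice_props(1)[OF latt])
  have Lint: "\<And>l m. l \<in> L \<Longrightarrow> (of_int m :: complex) *s l \<in> L" by (rule lattice_props(2)[OF latt])
  obtain \<delta> where \<delta>: "\<delta> > 0" "\<And>l. l \<in> L \<Longrightarrow> norm l < \<delta> \<Longrightarrow> l = 0" using lattice_props(3)[OF latt] by blast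
  have Mrep: "is_rep G M" using assms(4) unfolding group_acts_on_av_def is_rep_def by blast
  have Mp: "\<And>g l. g \<in> carrier G \<Longrightarrow> l \<in> L \<Longrightarrow> M g *v l \<in> L" using assms(4) unfolding group_acts_on_av_def by blast
  define dcs where "dcs = double_cosets G H"
  define pH where "pH = grp_alg_map G M (qc H)"
  define q where "q D = grp_alg_map G M (qc D)" for D
  define eW where "eW = grp_alg_map G M wc"
  define chi where "chi D = chi_avg \<rho> H D" for D
  have avg: "avg_map G M H D = q D" for D by (simp add: avg_qc q_def)
  have avgH: "avg_map G M H H = pH" by (simp add: avg_qc pH_def)
  have qH: "q H = pH" by (simp add: q_def pH_def)
  have eWm: "eW_map G M \<rho> = eW" unfolding eW_map_def eW_def wc_def[abs_def] ..
  have chiZ: "chi D \<in> \<int>" if "D \<in> dcs" for D using chi_int that unfolding chi_def dcs_def by blast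
  have chiL: "chi D *s l \<in> L" if D: "D \<in> dcs" and l: "l \<in> L" for D l
  proof -
    obtain m where "chi D = of_int m" using chiZ[OF D] by (auto elim: Ints_cases)
    thus ?thesis using Lint[OF l] by simp
  qed
  have pH_idem': "pH (pH x) = pH x" for x unfolding pH_def by (rule pH_idem[OF Mrep])
  have rng: "x \<in> range pH \<longleftrightarrow> pH x = x" for x
  proof
    assume "x \<in> range pH"
    then obtain y where "x = pH y" by blast
    thus "pH x = x" using pH_idem' by simp
  next
    assume "pH x = x"
    thus "x \<in> range pH" by (metis rangeI)
  qed
  have part2a: "q D l \<in> L" if D: "D \<in> dcs" and l: "l \<in> L" and lr: "pH l = l" for D l
  proof -
    have fx: "M h *v l = l" if "h \<in> H" for h using pH_fixed[OF Mrep that, of l] lr unfolding pH_def by simp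
    have "q D l = (\<Sum>C\<in>LC D. M (lrep C) *v l)"
      unfolding q_def by (rule Aop_qD_fixed[OF Mrep D[unfolded dcs_def] fx])
    also have "\<dots> \<in> L"
      by (rule Lsum[OF lat_axioms LC_fin[OF D[unfolded dcs_def]]]) (rule Mp[OF LC_props(2)[OF D[unfolded dcs_def]] l])
    finally show ?thesis .
  qed
  have part1: "\<forall>D\<in>double_cosets G H. chi_avg \<rho> H D \<in> \<int>" using chiZ unfolding chi_def dcs_def by blast
  have part2: "\<forall>D\<in>double_cosets G H.
            avg_map G M H D ` range (avg_map G M H H) \<subseteq> range (avg_map G M H H)
          \<and> (\<forall>l\<in>L \<inter> range (avg_map G M H H). avg_map G M H D l \<in> L)"
  proof (intro ballI conjI)
    fix D assume D: "D \<in> double_cosets G H"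
    show "avg_map G M H D ` range (avg_map G M H H) \<subseteq> range (avg_map G M H H)"
    proof
      fix y assume "y \<in> avg_map G M H D ` range (avg_map G M H H)"
      then obtain x where y: "y = q D (pH x)" by (auto simp only: avg qH)
      have "pH y = y" unfolding y q_def pH_def by (simp add: pH_qD[OF Mrep D])
      thus "y \<in> range (avg_map G M H H)" unfolding avgH using rng by blast
    qed
    fix l assume "l \<in> L \<inter> range (avg_map G M H H)"
    thus "avg_map G M H D l \<in> L" using part2a D rng unfolding dcs_def by (simp only: avg qH) blast
  qed

  define K where "K = {x. pH x = x \<and> (\<forall>D\<in>dcs. q D x = chi D *s x)}"
  have K0: "0 \<in> K" unfolding K_def pH_def q_def by (simp add: Aop_zero)
  have Kadd: "x + y \<in> K" if "x \<in> K" "y \<in> K" for x y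
    using that unfolding K_def pH_def q_def by (simp add: Aop_add vec.scale_right_distrib)
  have Ksc: "c *s x \<in> K" if "x \<in> K" for c x
    using that unfolding K_def pH_def q_def by (simp add: Aop_smult vec.scale_scale mult.commute)
  have rangeK: "range (\<lambda>x. pH (eW x)) = K"
  proof
    show "range (\<lambda>x. pH (eW x)) \<subseteq> K"
    proof
      fix y assume "y \<in> range (\<lambda>x. pH (eW x))"
      then obtain x where y: "y = pH (eW x)" by blast
      have "pH y = y" using y pH_idem' by simp
      moreover have "q D y = chi D *s y" if "D \<in> dcs" for D
        unfolding y q_def pH_def eW_def chi_def using M_eig[OF Mrep that[unfolded dcs_def]] .
      ultimately show "y \<in> K" unfolding K_def by blast
    qed
    show "K \<subseteq> range (\<lambda>x. pH (eW x))"
    proof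
      fix x assume x: "x \<in> K"
      have "pH (eW x) = x" unfolding pH_def eW_def
        by (rule M_fix[OF Mrep]) (use x in \<open>auto simp: K_def pH_def q_def chi_def dcs_def\<close>)
      thus "x \<in> range (\<lambda>x. pH (eW x))" by (metis rangeI)
    qed
  qed
  have compf: "pH \<circ> eW = grp_alg_map G M (conv (qc H) wc)"
    by (rule ext) (simp add: pH_def eW_def Aop_conv[OF Mrep])
  have qcrat: "qc D g \<in> \<rat>" for D g by (simp add: qc_def)
  have ratconv: "conv (qc H) wc g \<in> \<rat>" if g: "g \<in> carrier G" for g
    unfolding conv_def
  proof (rule Rats_sum)
    fix k assume k: "k \<in> carrier G"
    have "inv\<^bsub>G\<^esub> (inv\<^bsub>G\<^esub> k \<otimes>\<^bsub>G\<^esub> g) \<in> carrier G" using k g by simp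
    hence "character \<rho> (inv\<^bsub>G\<^esub> (inv\<^bsub>G\<^esub> k \<otimes>\<^bsub>G\<^esub> g)) \<in> \<rat>" using assms(8) by blast
    thus "qc H k * wc (inv\<^bsub>G\<^esub> k \<otimes>\<^bsub>G\<^esub> g) \<in> \<rat>" unfolding wc_def using qcrat by simp
  qed
  have LHS: "av_image L (pH \<circ> eW) = tpt L ` K"
  proof -
    have "av_image L (pH \<circ> eW) = tpt L ` range (grp_alg_map G M (conv (qc H) wc))"
      unfolding compf by (rule av_image_eq[OF end_denom_pos[OF lat_axioms Lint Mp ratconv]])
    also have "range (grp_alg_map G M (conv (qc H) wc)) = range (\<lambda>x. pH (eW x))"
      unfolding compf[symmetric] by (simp add: comp_def)
    finally show ?thesis using rangeK by (simp add: comp_def)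
  qed
  have avH: "av_image L pH = tpt L ` range pH"
    unfolding pH_def by (rule av_image_eq[OF end_denom_pos[OF lat_axioms Lint Mp qcrat]])
  define S where "S = {z \<in> av_image L pH. \<forall>D\<in>dcs. \<exists>x\<in>range pH. z = tpt L x \<and> tpt L (q D x) = tpt L (chi D *s x)}"
  have Seq: "{z \<in> av_image L (avg_map G M H H). \<forall>D\<in>double_cosets G H.
                    \<exists>x\<in>range (avg_map G M H H).
                      z = tpt L x \<and> tpt L (avg_map G M H D x) = tpt L (chi_avg \<rho> H D *s x)} = S"
    by (simp only: S_def avg qH chi_def dcs_def)
  have ofnatL: "(of_nat n :: complex) *s l \<in> L" if "l \<in> L" for n l using Lint[OF that, of "int n"] by simp
  define hH :: complex where "hH = of_nat (card H)"
  define Qm where "Qm y = hH *s pH y - hH *s y" for y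
  define Rm where "Rm D y = hH *s q D y - (hH * chi D) *s y" for D y
  have Qm_add: "Qm (x + y) = Qm x + Qm y" for x y
    by (simp add: Qm_def pH_def Aop_add vec.scale_right_distrib algebra_simps)
  have Qm_sc: "Qm (c *s x) = c *s Qm x" for c x
    by (simp add: Qm_def pH_def Aop_smult vec.scale_scale vec.scale_right_diff_distrib mult.commute)
  have Rm_add: "Rm D (x + y) = Rm D x + Rm D y" for D x y
    by (simp add: Rm_def q_def Aop_add vec.scale_right_distrib algebra_simps)
  have Rm_sc: "Rm D (c *s x) = c *s Rm D x" for D c x
    by (simp add: Rm_def q_def Aop_smult vec.scale_scale vec.scale_right_diff_distrib mult.commute)
  have Qm_diff: "Qm (x - y) = Qm x - Qm y" for x y
    using Qm_add[of "x - y" y] by (simp add: algebra_simps)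
  have Rm_diff: "Rm D (x - y) = Rm D x - Rm D y" for D x y
    using Rm_add[of D "x - y" y] by (simp add: algebra_simps)
  obtain KQ where KQ: "KQ > 0" "\<And>x. norm (Qm x) \<le> norm x * KQ"
    using clin_bounded[of Qm, OF Qm_add Qm_sc] by blast
  have "\<forall>D. \<exists>KD>0. \<forall>x. norm (Rm D x) \<le> norm x * KD"
    using clin_bounded Rm_add Rm_sc by blast
  then obtain KD where KD: "\<And>D. KD D > 0" "\<And>D x. norm (Rm D x) \<le> norm x * KD D" by metis
  define Ks where "Ks = KQ + (\<Sum>D\<in>dcs. KD D)"
  have dcsfin: "finite dcs" unfolding dcs_def by (rule dcs_fin)
  have sumKD: "(\<Sum>D\<in>dcs. KD D) \<ge> 0" using KD(1) by (simp add: sum_nonneg less_imp_le)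
  have Ks0: "Ks > 0" unfolding Ks_def using KQ sumKD by simp
  have KQs: "KQ \<le> Ks" unfolding Ks_def using sumKD by simp
  have KDs: "KD D \<le> Ks" if "D \<in> dcs" for D
  proof -
    have "KD D \<le> (\<Sum>D\<in>dcs. KD D)" using that dcsfin KD(1) by (intro member_le_sum) (auto simp: less_imp_le)
    thus ?thesis unfolding Ks_def using KQ by simp
  qed
  define e where "e = \<delta> / Ks"
  have e0: "e > 0" unfolding e_def using \<delta> Ks0 by simp
  have smallQ: "norm (Qm b) < \<delta>" if "norm b < e" for b
  proof -
    have "norm (Qm b) \<le> norm b * KQ" by (rule KQ(2))
    also have "\<dots> \<le> norm b * Ks" using KQs by (simp add: mult_left_mono)
    also have "\<dots> < e * Ks" using that Ks0 by simp
    also have "\<dots> = \<delta>" unfolding e_def using Ks0 by simp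
    finally show ?thesis .
  qed
  have smallR: "norm (Rm D b) < \<delta>" if "norm b < e" "D \<in> dcs" for D b
  proof -
    have "norm (Rm D b) \<le> norm b * KD D" by (rule KD(2))
    also have "\<dots> \<le> norm b * Ks" using KDs[OF that(2)] by (simp add: mult_left_mono)
    also have "\<dots> < e * Ks" using that Ks0 by simp
    also have "\<dots> = \<delta>" unfolding e_def using Ks0 by simp
    finally show ?thesis .
  qed
  have intL: "grp_alg_map G M (\<lambda>g. hH * qc D g) l \<in> L" if "l \<in> L" "D \<subseteq> carrier G" for D l
  proof (rule Aop_int_L[OF lat_axioms Lint Mp _ that(1)])
    fix g
    show "hH * qc D g \<in> \<int>"
    proof (cases "g \<in> D")
      case True
      have "hH * qc D g = 1" using True cardH by (simp add: hH_def qc_def)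
      thus ?thesis by simp
    next
      case False thus ?thesis by (simp add: qc_def)
    qed
  qed
  have QmL: "Qm l \<in> L" if "l \<in> L" for l
  proof -
    have "hH *s pH l = grp_alg_map G M (\<lambda>g. hH * qc H g) l" by (simp add: pH_def Aop_coef_smult)
    hence "hH *s pH l \<in> L" using intL[OF that H_sub] by simp
    moreover have "hH *s l \<in> L" unfolding hH_def by (rule ofnatL[OF that])
    ultimately show ?thesis unfolding Qm_def by (rule Ldiff)
  qed
  have RmL: "Rm D l \<in> L" if l: "l \<in> L" and D: "D \<in> dcs" for D l
  proof -
    have D': "D \<subseteq> carrier G" using D dcs_sub unfolding dcs_def by blast
    have "hH *s q D l = grp_alg_map G M (\<lambda>g. hH * qc D g) l" by (simp add: q_def Aop_coef_smult)
    hence "hH *s q D l \<in> L" using intL[OF l D'] by simp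
    moreover have "(hH * chi D) *s l \<in> L"
    proof -
      obtain m where "chi D = of_int m" using chiZ[OF D] by (auto elim: Ints_cases)
      hence "hH * chi D = of_int (int (card H) * m)" unfolding hH_def by simp
      thus ?thesis using Lint[OF l, of "int (card H) * m"] by metis
    qed
    ultimately show ?thesis unfolding Rm_def by (rule Ldiff)
  qed
  have key: "tpt L x \<in> tpt L ` K" if x: "tpt L x \<in> S" and k: "k \<in> K" and b: "norm b < e" and xkb: "x - k - b \<in> L" for x k b
  proof -
    have "tpt L x \<in> av_image L pH" using x unfolding S_def by blast
    then obtain y where y: "tpt L x = tpt L (pH y)" unfolding avH by blast
    define x0 where "x0 = pH y"
    have x0: "pH x0 = x0" unfolding x0_def by (rule pH_idem')
    have xx0: "x - x0 \<in> L" using y tpt_eq unfolding x0_def by blast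
    have eig0: "q D x0 - chi D *s x0 \<in> L" if D: "D \<in> dcs" for D
    proof -
      obtain xD where xD: "xD \<in> range pH" "tpt L x = tpt L xD" "tpt L (q D xD) = tpt L (chi D *s xD)"
        using x D unfolding S_def by blast
      have e1: "q D xD - chi D *s xD \<in> L" using xD(3) tpt_eq by blast
      have d: "x0 - xD \<in> L" using xD(2) y tpt_eq unfolding x0_def by (metis tpt_eq)
      have dr: "pH (x0 - xD) = x0 - xD" using x0 xD(1) rng unfolding pH_def by (simp add: Aop_diff)
      have e2: "q D (x0 - xD) - chi D *s (x0 - xD) \<in> L" using part2a[OF D d dr] chiL[OF D d] Ldiff by blast
      have eq: "q D x0 - chi D *s x0 = (q D xD - chi D *s xD) + (q D (x0 - xD) - chi D *s (x0 - xD))"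
        by (simp add: q_def Aop_diff vec.scale_right_diff_distrib algebra_simps)
      show ?thesis by (subst eq) (rule Ladd[OF e1 e2])
    qed
    define l where "l = x0 - k - b"
    have lL: "l \<in> L"
    proof -
      have "l = (x - k - b) - (x - x0)" unfolding l_def by simp
      thus ?thesis using Ldiff[OF xkb xx0] by simp
    qed
    have bd: "b = x0 - k - l" unfolding l_def by simp
    have kK: "pH k = k" "\<And>D. D \<in> dcs \<Longrightarrow> q D k = chi D *s k" using k unfolding K_def by auto
    have Qx0: "Qm x0 = 0" unfolding Qm_def using x0 by simp
    have Qk: "Qm k = 0" unfolding Qm_def using kK by simp
    have "Qm b = - Qm l" unfolding bd using Qx0 Qk by (simp add: Qm_diff)
    hence "Qm b \<in> L" using QmL[OF lL] Lneg by simp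
    hence Qb: "Qm b = 0" using \<delta>(2) smallQ[OF b] by blast
    have hH0: "hH \<noteq> 0" unfolding hH_def using cardH by simp
    have pHb: "pH b = b"
    proof -
      have "hH *s (pH b - b) = 0" using Qb unfolding Qm_def by (simp add: vec.scale_right_diff_distrib)
      thus ?thesis using hH0 by (simp add: vec.scale_eq_0_iff)
    qed
    have qb: "q D b = chi D *s b" if D: "D \<in> dcs" for D
    proof -
      have Rx0: "Rm D x0 \<in> L"
      proof -
        have "Rm D x0 = hH *s (q D x0 - chi D *s x0)"
          unfolding Rm_def by (simp add: vec.scale_right_diff_distrib vec.scale_scale)
        thus ?thesis using ofnatL[OF eig0[OF D]] unfolding hH_def by simp
      qed
      have Rk: "Rm D k = 0" unfolding Rm_def using kK(2)[OF D] by (simp add: vec.scale_scale)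
      have "Rm D b = Rm D x0 - Rm D l" unfolding bd using Rk by (simp add: Rm_diff)
      hence "Rm D b \<in> L" using Ldiff[OF Rx0 RmL[OF lL D]] by simp
      hence Rb: "Rm D b = 0" using \<delta>(2) smallR[OF b D] by blast
      have "hH *s q D b = hH *s (chi D *s b)" using Rb unfolding Rm_def
        by (simp add: vec.scale_scale)
      hence "(1 / hH) *s (hH *s q D b) = (1 / hH) *s (hH *s (chi D *s b))" by simp
      thus ?thesis using hH0 by (simp add: vec.scale_scale)
    qed
    have bK: "b \<in> K" unfolding K_def using pHb qb by blast
    have "x0 - l = k + b" unfolding bd by simp
    hence "x0 - l \<in> K" using Kadd[OF k bK] by simp
    moreover have "tpt L x = tpt L (x0 - l)"
    proof -
      have "x - (x0 - l) = (x - x0) + l" by simp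
      hence "x - (x0 - l) \<in> L" by (simp only:) (rule Ladd[OF xx0 lL])
      thus ?thesis using tpt_eq by blast
    qed
    ultimately show ?thesis by blast
  qed
  have convK: "convex K"
  proof (rule convexI)
    fix x y and u v :: real assume "x \<in> K" "y \<in> K"
    thus "u *\<^sub>R x + v *\<^sub>R y \<in> K" using Kadd Ksc by (simp add: cscale_real[symmetric])
  qed
  have SR: "S \<subseteq> range (tpt L)" unfolding S_def avH by blast
  have KS: "tpt L ` K \<subseteq> S"
  proof
    fix z assume "z \<in> tpt L ` K"
    then obtain k where k: "k \<in> K" "z = tpt L k" by blast
    have kr: "k \<in> range pH" using k rng unfolding K_def by blast
    show "z \<in> S" unfolding S_def avH using k kr unfolding K_def by auto
  qed
  have comp: "connected_component_of_set (subtopology (torus_top L) S) (tpt L 0) = tpt L ` K"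
    by (rule comp_eq[OF convex_connected[OF convK] K0 SR KS e0 key])
  show ?thesis unfolding Seq using part1 part2 comp LHS unfolding avgH eWm by simp
qed



end
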